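(* Let $f\in L^2(I)$ and let $g_0$ be the solution to $BEP_{2,\infty}$. Let $h$ be a real-valued Dini-continuous function on $\mathbb T$ whose support is contained in the interior $\mathring I$ of $I$, and let $$b(z)=\frac1{2\pi}\int_I\frac{e^{it}+z}{e^{it}-z}\,h(e^{it})\,dt,\qquad z\in\mathbb D.$$ Then $b$ extends continuously to $\overline{\mathbb D}$, and $$\mathrm{Re}\,\langle (f-g_0)\overline{g_0},\,b\rangle_I=0.$$
   Context: $\mathbb T$ unit circle, $\mathbb D$ unit disk, $\ell$ normalized Lebesgue measure. $I\subset\mathbb T$ measurable, $J=\mathbb T\setminus I$, $\ell(I)>0,\ell(J)>0$; $\mathring I$ is the interior of $I$ in $\mathbb T$. $\langle u,v\rangle_E=\frac1{2\pi}\int_E u\bar v\,d\theta$ and $\|h\|_{L^2(E)}=\langle h,h\rangle_E^{1/2}$. A function $h$ on $\mathbb T$ is Dini-continuous if $\omega_h(t)/t\in L^1([0,\pi])$, where $\omega_h(t)=\sup_{|\theta_1-\theta_2|\le t}|h(e^{i\theta_1})-h(e^{i\theta_2})|$. $H^2$ is the Hardy space. Problem $BEP_{2,\infty}$: given $f\in L^2(I)$, find $g_0\in H^2$ with $|g_0|\le1$ a.e. on $J$ minimizing $\|f-g\|_{L^2(I)}$ over all $g\in H^2$ with $|g|\le1$ a.e. on $J$; it has a unique solution. *)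

theory Defs
  imports "HOL-Analysis.Analysis"
begin

text \<open>The unit circle T is the complex sphere of radius 1; a function on T is a
function on complex numbers, evaluated at cis t.  A subset E of T is
parametrised by the angles in [0, 2 pi) hitting it.\<close>

definition circT :: "complex set" where
  "circT = sphere 0 1"

definition angles :: "complex set \<Rightarrow> real set" where
  "angles E = {t \<in> {0..<2*pi}. cis t \<in> E}"

definition ell :: "complex set \<Rightarrow> real" where
  "ell E = measure lebesgue (angles E) / (2*pi)"

definition meas_T :: "complex set \<Rightarrow> bool" where
  "meas_T E \<longleftrightarrow> E \<subseteq> circT \<and> angles E \<in> sets lebesgue"

definition L2_on :: "complex set \<Rightarrow> (complex \<Rightarrow> complex) \<Rightarrow> bool" where
  "L2_on E u \<longleftrightarrow>
     (\<lambda>t. indicator (angles E) t *\<^sub>R u (cis t)) \<in> borel_measurable lebesgue \<and>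
     set_integrable lebesgue (angles E) (\<lambda>t. (cmod (u (cis t)))\<^sup>2)"

definition inner_on :: "complex set \<Rightarrow> (complex \<Rightarrow> complex) \<Rightarrow> (complex \<Rightarrow> complex) \<Rightarrow> complex" where
  "inner_on E u v = complex_of_real (1/(2*pi)) *
     (LINT t:angles E|lebesgue. u (cis t) * cnj (v (cis t)))"

definition norm_on :: "complex set \<Rightarrow> (complex \<Rightarrow> complex) \<Rightarrow> real" where
  "norm_on E u = sqrt (Re (inner_on E u u))"

text \<open>Hardy space H^2, as boundary functions: L^2 functions on T whose Fourier
coefficients of negative index vanish.\<close>
definition H2 :: "(complex \<Rightarrow> complex) \<Rightarrow> bool" where
  "H2 g \<longleftrightarrow> L2_on circT g \<and>
     (\<forall>n::nat. n \<ge> 1 \<longrightarrow> (LINT t:{0..<2*pi}|lebesgue. g (cis t) * cis (real n * t)) = 0)"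

definition BEP_admissible :: "complex set \<Rightarrow> (complex \<Rightarrow> complex) \<Rightarrow> bool" where
  "BEP_admissible J g \<longleftrightarrow> H2 g \<and>
     (AE t in lebesgue. t \<in> angles J \<longrightarrow> cmod (g (cis t)) \<le> 1)"

definition BEP_solution :: "complex set \<Rightarrow> (complex \<Rightarrow> complex) \<Rightarrow> (complex \<Rightarrow> complex) \<Rightarrow> bool" where
  "BEP_solution I f g0 \<longleftrightarrow> BEP_admissible (circT - I) g0 \<and>
     (\<forall>g. BEP_admissible (circT - I) g \<longrightarrow>
        norm_on I (\<lambda>z. f z - g0 z) \<le> norm_on I (\<lambda>z. f z - g z))"

definition modcont :: "(complex \<Rightarrow> real) \<Rightarrow> real \<Rightarrow> ennreal" where
  "modcont h t = (SUP p \<in> {(a, b). \<bar>a - b\<bar> \<le> t}.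
       ennreal \<bar>h (cis (fst p)) - h (cis (snd p))\<bar>)"

definition dini_continuous :: "(complex \<Rightarrow> real) \<Rightarrow> bool" where
  "dini_continuous h \<longleftrightarrow>
     (\<integral>\<^sup>+ t. indicator {0<..pi} t * (modcont h t / ennreal t) \<partial>lborel) < \<infinity>"

definition herglotz :: "complex set \<Rightarrow> (complex \<Rightarrow> real) \<Rightarrow> complex \<Rightarrow> complex" where
  "herglotz I h z = complex_of_real (1/(2*pi)) *
     (LINT t:angles I|lebesgue. (cis t + z) / (cis t - z) * complex_of_real (h (cis t)))"

end

theory Submission
  imports Defs
begin

lemma mc_ge: "\<bar>a - b\<bar> \<le> t \<Longrightarrow> ennreal \<bar>h (cis a) - h (cis b)\<bar> \<le> modcont h t"
  unfolding modcont_def by (rule SUP_upper2[of "(a,b)"]) auto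

lemma mc_le: "(\<And>a b. \<bar>a - b\<bar> \<le> t \<Longrightarrow> \<bar>h (cis a) - h (cis b)\<bar> \<le> c) \<Longrightarrow> modcont h t \<le> ennreal c"
  unfolding modcont_def by (rule SUP_least) (auto intro: ennreal_leI)

lemma mc_mono: "mono (modcont h)"
  unfolding modcont_def mono_def by (intro allI impI SUP_subset_mono) auto

lemma inv_not_integrable: "(\<integral>\<^sup>+ t. indicator {0<..pi} t * ennreal (1/t) \<partial>lborel) = \<infinity>"
proof -
  have bnd: "ennreal (ln pi - ln d) \<le> (\<integral>\<^sup>+ t. indicator {0<..pi} t * ennreal (1/t) \<partial>lborel)"
    if d: "0 < d" "d \<le> pi" for d
  proof -
    have hi: "((\<lambda>t. 1/t) has_integral (ln pi - ln d)) {d..pi}"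
    proof -
      have "((\<lambda>t. 1/t) has_integral (ln pi - ln d)) {d..pi}"
        using d by (intro fundamental_theorem_of_calculus)
           (auto intro!: derivative_eq_intros simp: has_real_derivative_iff_has_vector_derivative[symmetric])
      then show ?thesis .
    qed
    have "ennreal (ln pi - ln d) = (\<integral>\<^sup>+ t. indicator {d..pi} t * (1/t) \<partial>lborel)"
      using nn_integral_has_integral_lebesgue[OF _ hi] d by auto
    also have "\<dots> \<le> (\<integral>\<^sup>+ t. indicator {0<..pi} t * ennreal (1/t) \<partial>lborel)"
      using d by (intro nn_integral_mono) (auto split: split_indicator)
    finally show ?thesis .
  qed
  show ?thesis
  proof (rule ccontr)
    assume "\<not> ?thesis"
    then obtain R where R: "(\<integral>\<^sup>+ t. indicator {0<..pi} t * ennreal (1/t) \<partial>lborel) = ennreal R" "0 \<le> R"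
      using less_top ennreal_cases by (metis infinity_ennreal_def)
    define d where "d = pi * exp (-(R+1))"
    have d0: "0 < d" "d \<le> pi" unfolding d_def using pi_gt3 R(2) by (auto simp: mult_le_cancel_left1)
    have "ln pi - ln d = R + 1" unfolding d_def using pi_gt3 by (simp add: ln_mult)
    with bnd[OF d0] R have "ennreal (R+1) \<le> ennreal R" by simp
    with R(2) show False by (simp add: ennreal_le_iff)
  qed
qed

lemma dini_uc:
  assumes "dini_continuous h" "e > 0"
  shows "\<exists>d>0. \<forall>a b. \<bar>a - b\<bar> \<le> d \<longrightarrow> \<bar>h (cis a) - h (cis b)\<bar> < e"
proof (rule ccontr)
  assume neg: "\<not> ?thesis"
  then have ge: "ennreal e \<le> modcont h t" if "t > 0" for t
  proof -
    have "\<exists>a b. \<bar>a - b\<bar> \<le> t \<and> \<bar>h (cis a) - h (cis b)\<bar> \<ge> e"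
      using neg that by (meson not_le)
    then obtain a b where "\<bar>a - b\<bar> \<le> t" "\<bar>h (cis a) - h (cis b)\<bar> \<ge> e"
      by blast
    then show ?thesis using mc_ge[of a b t h] by (meson ennreal_leI order_trans)
  qed
  have "(\<integral>\<^sup>+ t. indicator {0<..pi} t * ennreal (1/t) \<partial>lborel) * ennreal e
      = (\<integral>\<^sup>+ t. indicator {0<..pi} t * ennreal (1/t) * ennreal e \<partial>lborel)"
    by (rule nn_integral_multc[symmetric]) auto
  also have "\<dots> \<le> (\<integral>\<^sup>+ t. indicator {0<..pi} t * (modcont h t / ennreal t) \<partial>lborel)"
  proof (intro nn_integral_mono)
    fix t
    show "indicator {0<..pi} t * ennreal (1/t) * ennreal e \<le> indicator {0<..pi} t * (modcont h t / ennreal t)"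
    proof (cases "t \<in> {0<..pi}")
      case True
      then have "ennreal (1/t) * ennreal e = ennreal e / ennreal t"
        using assms(2) by (simp add: divide_ennreal ennreal_mult[symmetric])
      also have "\<dots> \<le> modcont h t / ennreal t"
        using ge[of t] True by (intro divide_right_mono_ennreal) auto
      finally show ?thesis using True by (simp add: mult.assoc)
    qed simp
  qed
  also have "\<dots> < \<infinity>" using assms(1) unfolding dini_continuous_def by simp
  finally show False using assms(2) by (simp add: inv_not_integrable ennreal_mult_top)
qed

lemma cis_periodic_int: "cis (u + 2 * pi * real_of_int k) = cis u"
proof -
  have "cis (u + 2 * pi * real_of_int k) = cis u * cis (2 * pi * real_of_int k)"
    by (rule cis_mult[symmetric])
  moreover have "cis (2 * pi * real_of_int k) = 1" by (rule cis_multiple_2pi) simp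
  ultimately show ?thesis by (metis mult_1_right)
qed

lemma dini_cont:
  assumes "dini_continuous h"
  shows "continuous_on UNIV (\<lambda>u. h (cis u))"
  unfolding continuous_on_iff
proof (intro ballI allI impI)
  fix x e :: real assume "e > 0"
  from dini_uc[OF assms this] obtain d where d: "d > 0" "\<And>a b. \<bar>a - b\<bar> \<le> d \<Longrightarrow> \<bar>h (cis a) - h (cis b)\<bar> < e"
    by blast
  show "\<exists>d>0. \<forall>x'\<in>UNIV. dist x' x < d \<longrightarrow> dist (h (cis x')) (h (cis x)) < e"
    using d by (intro exI[of _ d]) (auto simp: dist_real_def)
qed

lemma dini_bounded:
  assumes "dini_continuous h"
  shows "\<exists>M. 0 \<le> M \<and> (\<forall>u. \<bar>h (cis u)\<bar> \<le> M)"
proof -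
  have "compact ((\<lambda>u. h (cis u)) ` {0..2*pi})"
    by (intro compact_continuous_image continuous_on_subset[OF dini_cont[OF assms]]) auto
  then obtain M where M: "\<And>y. y \<in> (\<lambda>u. h (cis u)) ` {0..2*pi} \<Longrightarrow> \<bar>y\<bar> \<le> M"
    using compact_imp_bounded[of "(\<lambda>u. h (cis u)) ` {0..2*pi}"] unfolding bounded_iff real_norm_def by blast
  have "\<bar>h (cis u)\<bar> \<le> M" for u
  proof -
    define k where "k = \<lfloor>u / (2*pi)\<rfloor>"
    define v where "v = u - 2*pi*k"
    have "k \<le> u / (2*pi)" "u / (2*pi) < k + 1" unfolding k_def by linarith+
    then have "2*pi*k \<le> u" "u < 2*pi*(k+1)" using pi_gt_zero by (simp_all add: field_simps)
    then have v: "0 \<le> v" "v \<le> 2*pi" unfolding v_def by (simp_all add: algebra_simps)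
    have "cis u = cis v" unfolding v_def using cis_periodic_int[of "u - 2*pi*k" k] by simp
    then show ?thesis using M[of "h (cis v)"] v by auto
  qed
  moreover have "0 \<le> M" using M[of "h (cis 0)"] by force
  ultimately show ?thesis by blast
qed

lemma one_minus_cos_ge: assumes "\<bar>x\<bar> \<le> pi" shows "x\<^sup>2 / 18 \<le> 1 - cos x"
proof -
  define y where "y = \<bar>x\<bar> / 2"
  have y: "0 \<le> y" "y \<le> pi/2" using assms unfolding y_def by auto
  have cx: "cos x = 1 - 2 * (sin y)\<^sup>2"
  proof -
    have "cos x = cos \<bar>x\<bar>" by (simp add: abs_real_def)
    also have "\<bar>x\<bar> = 2 * y" unfolding y_def by simp
    finally show ?thesis by (simp add: cos_double_sin)
  qed
  have "\<bar>sin y - (\<Sum>m<3. sin_coeff m * y ^ m)\<bar> \<le> inverse (fact 3) * \<bar>y\<bar> ^ 3"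
    by (rule Maclaurin_sin_bound)
  then have "\<bar>sin y - y\<bar> \<le> y^3 / 6"
    using y(1) by (simp add: eval_nat_numeral sin_coeff_def fact_numeral divide_simps)
  then have s3: "y - y^3/6 \<le> sin y" using abs_ge_minus_self[of "sin y - y"] by linarith
  have "y \<le> 2" using y pi_less_4 by simp
  then have "y * y \<le> 2 * 2" using y by (intro mult_mono) auto
  then have "y * (y * y) \<le> y * 4" using y by (intro mult_left_mono) auto
  then have "y/3 \<le> y - y^3/6" by (simp add: power3_eq_cube)
  with s3 have "y/3 \<le> sin y" by linarith
  then have "(y/3)\<^sup>2 \<le> (sin y)\<^sup>2" using y by (intro power_mono) auto
  then have "x\<^sup>2 / 18 \<le> 2 * (sin y)\<^sup>2" unfolding y_def by (simp add: power2_eq_square)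
  then show ?thesis using cx by simp
qed

definition kr :: "real \<Rightarrow> real \<Rightarrow> complex" where
  "kr r x = (cis (-x) + complex_of_real r) / (cis (-x) - complex_of_real r)"

lemma cmod_cis_minus_sq: "(cmod (cis (-x) - complex_of_real r))\<^sup>2 = (1 - r)\<^sup>2 + 2 * r * (1 - cos x)"
proof -
  have "(cmod (cis (-x) - complex_of_real r))\<^sup>2 = (cos x - r)\<^sup>2 + (sin x)\<^sup>2"
    by (simp add: cmod_power2)
  also have "\<dots> = (1 - r)\<^sup>2 + 2 * r * (1 - cos x)"
    using sin_cos_squared_add[of x] by (simp add: power2_eq_square algebra_simps)
  finally show ?thesis .
qed

lemma den_bound: assumes "1/2 \<le> r" "\<bar>x\<bar> \<le> pi" shows "\<bar>x\<bar> / 5 \<le> cmod (cis (-x) - complex_of_real r)"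
proof -
  have a: "x\<^sup>2 / 18 \<le> 1 - cos x" by (rule one_minus_cos_ge[OF assms(2)])
  have b: "0 \<le> 1 - cos x" by simp
  have "(\<bar>x\<bar> / 5)\<^sup>2 \<le> x\<^sup>2 / 18" by (simp add: power2_eq_square divide_simps)
  also have "\<dots> \<le> 1 - cos x" by (rule a)
  also have "\<dots> \<le> 2 * r * (1 - cos x)" using mult_right_mono[of 1 "2*r" "1 - cos x"] assms(1) b by simp
  also have "\<dots> \<le> (1 - r)\<^sup>2 + 2 * r * (1 - cos x)" by simp
  also have "\<dots> = (cmod (cis (-x) - complex_of_real r))\<^sup>2" by (simp add: cmod_cis_minus_sq)
  finally show ?thesis by (rule power2_le_imp_le) simp
qed

lemma kr_bound: assumes "1/2 \<le> r" "r \<le> 1" "\<bar>x\<bar> \<le> pi" "x \<noteq> 0" shows "cmod (kr r x) \<le> 10 / \<bar>x\<bar>"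
proof -
  have d: "\<bar>x\<bar> / 5 \<le> cmod (cis (-x) - complex_of_real r)" by (rule den_bound) (use assms in auto)
  have n: "cmod (cis (-x) + complex_of_real r) \<le> 2"
    using norm_triangle_ineq[of "cis (-x)" "complex_of_real r"] assms by simp
  have pos: "0 < \<bar>x\<bar> / 5" using assms by simp
  have "cmod (kr r x) = cmod (cis (-x) + complex_of_real r) / cmod (cis (-x) - complex_of_real r)"
    unfolding kr_def by (simp add: norm_divide)
  also have "\<dots> \<le> 2 / (\<bar>x\<bar> / 5)"
    using d n pos by (intro frac_le) auto
  finally show ?thesis by simp
qed

lemma kr_tendsto: assumes "\<bar>x\<bar> \<le> pi" "x \<noteq> 0" shows "((\<lambda>r. kr r x) \<longlongrightarrow> kr 1 x) (at_left 1)"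
proof -
  have "\<bar>x\<bar> / 5 \<le> cmod (cis (-x) - complex_of_real 1)" by (rule den_bound) (use assms in auto)
  moreover have "0 < \<bar>x\<bar> / 5" using assms by simp
  ultimately have "0 < cmod (cis (-x) - complex_of_real 1)" by linarith
  then have "cis (-x) - complex_of_real 1 \<noteq> 0" by auto
  then show ?thesis unfolding kr_def
    by (intro tendsto_intros) (auto intro!: tendsto_intros tendsto_ident_at)
qed

lemma Re_kr1: "Re (kr 1 x) = 0"
proof -
  have "(cos x + 1) * (cos x - 1) + (sin x)\<^sup>2 = 0" using sin_cos_squared_add[of x]
    by (simp add: power2_eq_square algebra_simps)
  then show ?thesis unfolding kr_def by (simp add: Re_divide power2_eq_square algebra_simps)
qed

lemma meas_Ico: "measure lebesgue {0..<2*pi} = 2*pi"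
  using pi_gt_zero by (simp add: measure_completion)

lemma emeas_Ico: "emeasure lebesgue {0..<2*pi} < \<infinity>"
  by (simp add: emeasure_completion)

lemma AE_leb_neq: "AE x in lebesgue. x \<noteq> (c::real)"
  using AE_lborel_singleton[of c] by (rule AE_completion)

lemma cont_setint:
  fixes F :: "real \<Rightarrow> 'a::euclidean_space"
  assumes "continuous_on UNIV F" shows "set_integrable lebesgue {0..<2*pi} F"
proof -
  have "set_integrable lebesgue {0..2*pi} F"
    by (rule absolutely_integrable_continuous_real) (rule continuous_on_subset[OF assms], auto)
  then show ?thesis by (rule set_integrable_subset) auto
qed

lemma set_int_sum:
  fixes f :: "'i \<Rightarrow> 'a \<Rightarrow> 'b::{banach, second_countable_topology}"
  assumes "finite S" "\<And>i. i \<in> S \<Longrightarrow> set_integrable M A (f i)"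
  shows "(LINT x:A|M. (\<Sum>i\<in>S. f i x)) = (\<Sum>i\<in>S. LINT x:A|M. f i x)"
  unfolding set_lebesgue_integral_def scaleR_sum_right
  by (rule Bochner_Integration.integral_sum) (use assms in \<open>auto simp: set_integrable_def\<close>)

lemma set_int_sum_integrable:
  fixes f :: "'i \<Rightarrow> 'a \<Rightarrow> 'b::{banach, second_countable_topology}"
  assumes "finite S" "\<And>i. i \<in> S \<Longrightarrow> set_integrable M A (f i)"
  shows "set_integrable M A (\<lambda>x. \<Sum>i\<in>S. f i x)"
  unfolding set_integrable_def scaleR_sum_right
  by (rule Bochner_Integration.integrable_sum) (use assms in \<open>auto simp: set_integrable_def\<close>)

lemma set_int_bound:
  fixes f :: "real \<Rightarrow> 'b::{banach, second_countable_topology}"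
  assumes "set_integrable lebesgue {0..<2*pi} f" "\<And>x. x \<in> {0..<2*pi} \<Longrightarrow> norm (f x) \<le> B"
  shows "norm (LINT x:{0..<2*pi}|lebesgue. f x) \<le> 2*pi*B"
proof -
  have "norm (LINT x:{0..<2*pi}|lebesgue. f x) \<le> (LINT x:{0..<2*pi}|lebesgue. norm (f x))"
    by (rule set_integral_norm_bound[OF assms(1)])
  also have "\<dots> \<le> (LINT x:{0..<2*pi}|lebesgue. B)"
  proof (rule set_integral_mono)
    show "set_integrable lebesgue {0..<2*pi} (\<lambda>x. norm (f x))"
      using assms(1) by (rule set_integrable_norm)
    show "set_integrable lebesgue {0..<2*pi} (\<lambda>x. B)"
      using emeas_Ico by (simp add: set_integrable_def)
  qed (use assms(2) in auto)
  also have "\<dots> = 2*pi*B" using emeas_Ico by (simp add: set_integral_const meas_Ico)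
  finally show ?thesis .
qed

definition Kh :: "real \<Rightarrow> complex \<Rightarrow> complex" where
  "Kh u z = (cis u + z) / (cis u - z)"

definition Sop :: "(real \<Rightarrow> complex) \<Rightarrow> complex \<Rightarrow> complex" where
  "Sop \<phi> z = (LINT u:{0..<2*pi}|lebesgue. Kh u z * \<phi> u)"

definition coef :: "(real \<Rightarrow> complex) \<Rightarrow> nat \<Rightarrow> complex" where
  "coef \<phi> n = (LINT u:{0..<2*pi}|lebesgue. cis (-(real n * u)) * \<phi> u)"

lemma cis_neq_z: "norm z < 1 \<Longrightarrow> cis u - z \<noteq> 0"
  by auto

lemma Kh_cont: "norm z < 1 \<Longrightarrow> continuous_on UNIV (\<lambda>u. Kh u z)"
  unfolding Kh_def by (intro continuous_intros) auto

lemma Kh_geom: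
  assumes "norm z < 1"
  shows "Kh u z - (-1 + 2 * (\<Sum>n<N. z^n * cis (-(real n * u)))) = 2 * (z * cis (-u))^N / (1 - z * cis (-u))"
proof -
  define q where "q = z * cis (-u)"
  have nq: "norm q = norm z" unfolding q_def by (simp add: norm_mult)
  then have q1: "q \<noteq> 1" using assms by auto
  have q1': "1 - q \<noteq> 0" using q1 by simp
  have c: "cis u * cis (-u) = 1" by (simp add: cis_mult)
  have K: "Kh u z = (1 + q) / (1 - q)"
  proof -
    have "cis u - z \<noteq> 0" using assms by auto
    have "(cis u + z) * (1 - q) = (1 + q) * (cis u - z)"
      unfolding q_def using c by (simp add: algebra_simps)
    then show ?thesis unfolding Kh_def using \<open>cis u - z \<noteq> 0\<close> q1'
      by (simp add: divide_eq_eq eq_divide_eq)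
  qed
  have S1: "(\<Sum>n<N. z^n * cis (-(real n * u))) = (\<Sum>n<N. q^n)"
  proof (intro sum.cong refl)
    fix n show "z^n * cis (-(real n * u)) = q^n"
    proof -
      have "q^n = z^n * cis (-u)^n" unfolding q_def by (rule power_mult_distrib)
      also have "cis (-u)^n = cis (real n * (-u))" by (rule Complex.DeMoivre)
      finally show ?thesis by simp
    qed
  qed
  have S2: "(\<Sum>n<N. q^n) = (1 - q^N) / (1 - q)"
    using q1 by (simp add: sum_gp_strict)
  define w where "w = 1 / (1 - q)"
  have w: "(1 - q) * w = 1" unfolding w_def using q1' by simp
  have "(1+q)*w - (-1 + 2*((1-q^N)*w)) - 2*q^N*w = -((1-q)*w) + 1" by (simp add: algebra_simps)
  then have "(1+q)*w - (-1 + 2*((1-q^N)*w)) = 2*q^N*w" using w by (simp add: algebra_simps)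
  then have "(1 + q) / (1 - q) - (-1 + 2 * ((1 - q^N) / (1 - q))) = 2 * q^N / (1 - q)"
    unfolding w_def by (simp add: divide_inverse)
  then show ?thesis unfolding K S1 S2 q_def[symmetric] .
qed

lemma Kh_geom_bound:
  assumes "norm z < 1"
  shows "norm (Kh u z - (-1 + 2 * (\<Sum>n<N. z^n * cis (-(real n * u))))) \<le> 2 * norm z ^ N / (1 - norm z)"
proof -
  define q where "q = z * cis (-u)"
  have nq: "norm q = norm z" unfolding q_def by (simp add: norm_mult)
  have "1 - norm z \<le> norm (1 - q)"
    using norm_triangle_ineq2[of 1 q] nq by simp
  moreover have "0 < 1 - norm z" using assms by simp
  ultimately have "norm (2 * q^N / (1 - q)) \<le> 2 * norm z ^ N / (1 - norm z)"
    by (simp add: norm_divide norm_mult norm_power nq frac_le)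
  then show ?thesis using Kh_geom[OF assms, of u N] unfolding q_def by simp
qed

lemma Sop_approx:
  assumes z: "norm z < 1" and pc: "continuous_on UNIV \<phi>" and pb: "\<And>u. norm (\<phi> u) \<le> M"
  shows "norm (Sop \<phi> z - (- coef \<phi> 0 + 2 * (\<Sum>n<N. coef \<phi> n * z^n))) \<le> 2*pi*(2 * norm z^N / (1 - norm z) * M)"
proof -
  define P where "P u = -1 + 2 * (\<Sum>n<N. z^n * cis (-(real n * u)))" for u
  have ic: "set_integrable lebesgue {0..<2*pi} (\<lambda>u. cis (-(real n * u)) * \<phi> u)" for n
    by (rule cont_setint) (intro continuous_intros pc)
  have iK: "set_integrable lebesgue {0..<2*pi} (\<lambda>u. Kh u z * \<phi> u)"
    by (rule cont_setint) (intro continuous_intros pc Kh_cont z)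
  have iphi: "set_integrable lebesgue {0..<2*pi} \<phi>"
    by (rule cont_setint) (rule pc)
  have eqP: "P u * \<phi> u = (\<Sum>n<N. 2 * z^n * (cis (-(real n * u)) * \<phi> u)) - \<phi> u" for u
    unfolding P_def by (simp add: algebra_simps sum_distrib_left sum_distrib_right)
  have isum: "set_integrable lebesgue {0..<2*pi} (\<lambda>u. \<Sum>n<N. 2 * z^n * (cis (-(real n * u)) * \<phi> u))"
    by (intro set_int_sum_integrable) (auto intro!: set_integrable_mult_right ic)
  have iP: "set_integrable lebesgue {0..<2*pi} (\<lambda>u. P u * \<phi> u)"
    unfolding eqP by (intro set_integral_diff(1) isum iphi)
  have "(LINT u:{0..<2*pi}|lebesgue. P u * \<phi> u)
      = (LINT u:{0..<2*pi}|lebesgue. (\<Sum>n<N. 2 * z^n * (cis (-(real n * u)) * \<phi> u))) - (LINT u:{0..<2*pi}|lebesgue. \<phi> u)"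
    unfolding eqP by (rule set_integral_diff(2)[OF isum iphi])
  also have "(LINT u:{0..<2*pi}|lebesgue. (\<Sum>n<N. 2 * z^n * (cis (-(real n * u)) * \<phi> u)))
      = (\<Sum>n<N. 2 * z^n * coef \<phi> n)"
    by (subst set_int_sum) (auto intro!: set_integrable_mult_right ic simp: coef_def)
  also have "(LINT u:{0..<2*pi}|lebesgue. \<phi> u) = coef \<phi> 0" unfolding coef_def by simp
  finally have LP: "(LINT u:{0..<2*pi}|lebesgue. P u * \<phi> u) = - coef \<phi> 0 + 2 * (\<Sum>n<N. coef \<phi> n * z^n)"
    by (simp add: sum_distrib_left algebra_simps)
  have "Sop \<phi> z - (- coef \<phi> 0 + 2 * (\<Sum>n<N. coef \<phi> n * z^n)) = (LINT u:{0..<2*pi}|lebesgue. (Kh u z - P u) * \<phi> u)"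
    unfolding Sop_def LP[symmetric] left_diff_distrib by (rule set_integral_diff(2)[symmetric, OF iK iP])
  also have "norm \<dots> \<le> 2*pi*(2 * norm z^N / (1 - norm z) * M)"
  proof (rule set_int_bound)
    show "set_integrable lebesgue {0..<2*pi} (\<lambda>u. (Kh u z - P u) * \<phi> u)"
      unfolding left_diff_distrib by (intro set_integral_diff(1) iK iP)
    fix u
    have "norm (Kh u z - P u) \<le> 2 * norm z ^ N / (1 - norm z)"
      unfolding P_def by (rule Kh_geom_bound[OF z])
    then show "norm ((Kh u z - P u) * \<phi> u) \<le> 2 * norm z ^ N / (1 - norm z) * M"
      unfolding norm_mult by (intro mult_mono pb) (use z in auto)
  qed
  finally show ?thesis .
qed

lemma Ico_to_HK:
  fixes F :: "real \<Rightarrow> 'a::euclidean_space"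
  assumes "continuous_on UNIV F"
  shows "(LINT u:{0..<2*pi}|lebesgue. F u) = integral {0..2*pi} F"
proof -
  have i2: "set_integrable lebesgue {0..2*pi} F"
    by (rule absolutely_integrable_continuous_real) (rule continuous_on_subset[OF assms], auto)
  have i1: "set_integrable lebesgue {0..<2*pi} F" by (rule cont_setint[OF assms])
  have "(LINT u:{0..<2*pi}|lebesgue. F u) = (LINT u:{0..2*pi}|lebesgue. F u)"
  proof (rule set_integral_cong_set)
    show "set_borel_measurable lebesgue {0..2*pi} F" "set_borel_measurable lebesgue {0..<2*pi} F"
      using i1 i2 by (auto simp: set_integrable_def set_borel_measurable_def)
    show "AE x in lebesgue. (x \<in> {0..2*pi}) = (x \<in> {0..<2*pi})"
      using AE_leb_neq[of "2*pi"] by eventually_elim auto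
  qed
  also have "\<dots> = integral {0..2*pi} F" by (rule set_lebesgue_integral_eq_integral(2)[OF i2])
  finally show ?thesis .
qed

lemma int_cis0:
  assumes "n \<ge> 1"
  shows "(LINT u:{0..<2*pi}|lebesgue. cis (-(real n * u))) = 0"
proof -
  define G where "G w = \<i> * exp (-(\<i> * of_nat n * w)) / of_nat n" for w :: complex
  have n0: "(of_nat n :: complex) \<noteq> 0" using assms by simp
  have ii: "-(\<i> * (E * \<i>)) = (E::complex)" for E
    by (simp add: mult.left_commute[of \<i> E])
  have dG: "(G has_field_derivative exp (-(\<i> * of_nat n * w))) (at w)" for w
    unfolding G_def using n0 by (auto intro!: derivative_eq_intros simp: ii)
  have ce: "cis (-(real n * x)) = exp (-(\<i> * of_nat n * complex_of_real x))" for x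
    by (simp add: cis_conv_exp mult.assoc)
  have Gc: "G (complex_of_real x) = \<i> * cis (-(real n * x)) / of_nat n" for x
    unfolding G_def ce by simp
  have "((\<lambda>x. cis (-(real n * x))) has_integral (G (of_real (2*pi)) - G (of_real 0))) {0..2*pi}"
  proof (rule fundamental_theorem_of_calculus)
    fix x assume "x \<in> {0..2*pi}"
    show "((\<lambda>x. G (of_real x)) has_vector_derivative cis (-(real n * x))) (at x within {0..2*pi})"
      unfolding ce by (rule has_vector_derivative_real_field[OF dG])
  qed simp
  moreover have "G (of_real (2*pi)) = G (of_real 0)"
  proof -
    have "cis (-(real n * (2*pi))) = 1"
      using cis_multiple_2pi[of "- real n"] by (simp add: mult.commute mult.left_commute)
    then show ?thesis unfolding Gc by simp
  qed
  ultimately have "integral {0..2*pi} (\<lambda>x. cis (-(real n * x))) = 0" by (simp add: integral_unique)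
  then show ?thesis by (subst Ico_to_HK) (auto intro!: continuous_intros)
qed

lemma coef_one: "coef (\<lambda>_. 1) n = (if n = 0 then 2*pi else 0)"
proof (cases "n = 0")
  case True
  then show ?thesis unfolding coef_def using emeas_Ico by (simp add: set_integral_const meas_Ico scaleR_conv_of_real)
next
  case False
  then show ?thesis unfolding coef_def using int_cis0[of n] by simp
qed

lemma Sop_one: assumes "norm z < 1" shows "Sop (\<lambda>_. 1) z = 2*pi"
proof -
  have b: "norm (Sop (\<lambda>_. 1) z - 2*pi) \<le> 2*pi*(2 * norm z^N / (1 - norm z) * 1)" for N
  proof -
    have "(- coef (\<lambda>_. 1) 0 + 2 * (\<Sum>n<Suc N. coef (\<lambda>_. 1) n * z^n)) = 2*pi"
    proof -
      have "(\<Sum>n<Suc N. coef (\<lambda>_. 1) n * z^n) = (\<Sum>n<Suc N. (if n = 0 then 2*complex_of_real pi else 0))"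
        by (intro sum.cong refl) (simp add: coef_one)
      also have "\<dots> = 2*pi" by (simp add: sum.delta)
      finally show ?thesis by (simp add: coef_one)
    qed
    moreover have "norm (Sop (\<lambda>_. 1) z - (- coef (\<lambda>_. 1) 0 + 2 * (\<Sum>n<Suc N. coef (\<lambda>_. 1) n * z^n)))
        \<le> 2*pi*(2 * norm z^Suc N / (1 - norm z) * 1)"
      by (rule Sop_approx[OF assms]) auto
    moreover have "norm z^Suc N \<le> norm z^N" using assms by (simp add: mult_left_le_one_le)
    then have "2*pi*(2 * norm z^Suc N / (1 - norm z) * 1) \<le> 2*pi*(2 * norm z^N / (1 - norm z) * 1)"
      using assms by (simp add: divide_right_mono)
    ultimately show ?thesis by simp
  qed
  have "(\<lambda>N. 2*pi*(2 * norm z^N / (1 - norm z) * 1)) \<longlonglongrightarrow> 2*pi*(2 * 0 / (1 - norm z) * 1)"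
    using assms by (intro tendsto_intros LIMSEQ_power_zero) auto
  then have "norm (Sop (\<lambda>_. 1) z - 2*pi) \<le> 0"
    using b by (intro LIMSEQ_le_const) auto
  then show ?thesis by simp
qed

lemma periodic_shift:
  fixes F :: "real \<Rightarrow> 'a::euclidean_space"
  assumes c: "continuous_on UNIV F" and p: "\<And>x. F (x + 2*pi) = F x" and a: "-2*pi \<le> a" "a \<le> 0"
  shows "integral {a..a+2*pi} F = integral {0..2*pi} F"
proof -
  have int: "F integrable_on {s..t}" for s t
    by (rule integrable_continuous_real) (rule continuous_on_subset[OF c], auto)
  have A: "integral {a..a+2*pi} F = integral {a..0} F + integral {0..a+2*pi} F"
    using Henstock_Kurzweil_Integration.integral_combine[of a 0 "a+2*pi" F] int a by auto
  have B: "integral {a..0} F = integral {a+2*pi..2*pi} F"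
  proof -
    have "integral {(a+2*pi)-2*pi..2*pi-2*pi} (\<lambda>x. F (x + 2*pi)) = integral {a+2*pi..2*pi} F"
      by (rule integral_shift_real_ivl)
    then show ?thesis by (simp add: p)
  qed
  have C: "integral {0..a+2*pi} F + integral {a+2*pi..2*pi} F = integral {0..2*pi} F"
    using Henstock_Kurzweil_Integration.integral_combine[of 0 "a+2*pi" "2*pi" F] int a by auto
  show ?thesis using A B C by (simp add: algebra_simps)
qed

lemma conv_subst:
  fixes F :: "real \<Rightarrow> 'a::euclidean_space"
  assumes c: "continuous_on UNIV F" and p: "\<And>x. F (x + 2*pi) = F x" and th: "-pi \<le> \<theta>" "\<theta> \<le> pi"
  shows "integral {-pi..pi} (\<lambda>x. F (\<theta> - x)) = integral {0..2*pi} F"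
proof -
  have "integral {-pi..pi} (\<lambda>x. F (\<theta> - x)) = integral {-pi..pi} (\<lambda>x. (\<lambda>y. F (y + \<theta>)) (-x))"
    by (simp add: algebra_simps)
  also have "\<dots> = integral {-pi..pi} (\<lambda>y. F (y + \<theta>))"
    using Henstock_Kurzweil_Integration.integral_reflect_real[of pi "-pi" "\<lambda>y. F (y + \<theta>)"] by simp
  also have "\<dots> = integral {(\<theta>-pi)-\<theta>..(\<theta>+pi)-\<theta>} (\<lambda>y. F (y + \<theta>))" by simp
  also have "\<dots> = integral {\<theta>-pi..\<theta>+pi} F" by (rule integral_shift_real_ivl)
  also have "\<dots> = integral {(\<theta>-pi)..(\<theta>-pi)+2*pi} F" by (simp add: algebra_simps)
  also have "\<dots> = integral {0..2*pi} F"
    by (rule periodic_shift[OF c p]) (use th in auto)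
  finally show ?thesis .
qed

lemma cont_setint_sym:
  fixes F :: "real \<Rightarrow> 'a::euclidean_space"
  assumes "continuous_on UNIV F"
  shows "set_integrable lebesgue {-pi..pi} F" "(LINT x:{-pi..pi}|lebesgue. F x) = integral {-pi..pi} F"
proof -
  show i: "set_integrable lebesgue {-pi..pi} F"
    by (rule absolutely_integrable_continuous_real) (rule continuous_on_subset[OF assms], auto)
  show "(LINT x:{-pi..pi}|lebesgue. F x) = integral {-pi..pi} F"
    by (rule set_lebesgue_integral_eq_integral(2)[OF i])
qed

lemma cis_2pi_shift: "cis (x + 2*pi) = cis x"
  using cis_periodic_int[of x 1] by simp

lemma kr_den_nz: "0 \<le> r \<Longrightarrow> r < 1 \<Longrightarrow> cis (-x) \<noteq> complex_of_real r"
proof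
  assume "0 \<le> r" "r < 1" "cis (-x) = complex_of_real r"
  then have "norm (cis (-x)) = norm (complex_of_real r)" by simp
  with \<open>0 \<le> r\<close> \<open>r < 1\<close> show False by simp
qed

lemma kr_cont: "0 \<le> r \<Longrightarrow> r < 1 \<Longrightarrow> continuous_on UNIV (kr r)"
  unfolding kr_def by (intro continuous_intros) (auto simp: kr_den_nz)

lemma Kh_kr: "Kh (\<theta> - x) (complex_of_real r * cis \<theta>) = kr r x"
proof -
  have c: "cis (\<theta> - x) = cis \<theta> * cis (-x)" by (simp add: cis_mult)
  have n: "cis \<theta> \<noteq> 0" by (simp add: cis_neq_zero)
  have e1: "cis \<theta> * cis (-x) + complex_of_real r * cis \<theta> = cis \<theta> * (cis (-x) + complex_of_real r)"
    by (simp add: algebra_simps)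
  have e2: "cis \<theta> * cis (-x) - complex_of_real r * cis \<theta> = cis \<theta> * (cis (-x) - complex_of_real r)"
    by (simp add: algebra_simps)
  show ?thesis unfolding Kh_def kr_def c e1 e2 by (rule mult_divide_mult_cancel_left[OF n])
qed

lemma Sop_conv:
  assumes pc: "continuous_on UNIV \<phi>" and pp: "\<And>x. \<phi> (x + 2*pi) = \<phi> x"
    and r: "0 \<le> r" "r < 1" and th: "-pi \<le> \<theta>" "\<theta> \<le> pi"
  shows "Sop \<phi> (complex_of_real r * cis \<theta>) = (LINT x:{-pi..pi}|lebesgue. kr r x * \<phi> (\<theta> - x))"
proof -
  define z where "z = complex_of_real r * cis \<theta>"
  have z: "norm z < 1" unfolding z_def using r by (simp add: norm_mult)
  define F where "F u = Kh u z * \<phi> u" for u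
  have Fc: "continuous_on UNIV F" unfolding F_def by (intro continuous_intros Kh_cont z pc)
  have Fp: "F (x + 2*pi) = F x" for x unfolding F_def Kh_def by (simp add: cis_2pi_shift pp)
  have "Sop \<phi> z = integral {0..2*pi} F" unfolding Sop_def F_def[symmetric] by (rule Ico_to_HK[OF Fc])
  also have "\<dots> = integral {-pi..pi} (\<lambda>x. F (\<theta> - x))" by (rule conv_subst[OF Fc Fp th, symmetric])
  also have "\<dots> = (LINT x:{-pi..pi}|lebesgue. F (\<theta> - x))"
    by (rule cont_setint_sym(2)[symmetric]) (intro continuous_intros continuous_on_compose2[OF Fc], auto)
  also have "\<dots> = (LINT x:{-pi..pi}|lebesgue. kr r x * \<phi> (\<theta> - x))"
    unfolding F_def z_def Kh_kr ..
  finally show ?thesis unfolding z_def .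
qed

lemma mc_fin: assumes Mb: "\<And>u. \<bar>h (cis u)\<bar> \<le> M" shows "modcont h t \<le> ennreal (2*M)"
proof (rule mc_le)
  fix a b :: real
  show "\<bar>h (cis a) - h (cis b)\<bar> \<le> 2*M" using Mb[of a] Mb[of b] by linarith
qed

definition om :: "(complex \<Rightarrow> real) \<Rightarrow> real \<Rightarrow> real" where
  "om h x = enn2real (modcont h \<bar>x\<bar>)"

lemma om_nonneg: "0 \<le> om h x" unfolding om_def by simp

lemma om_eq: assumes Mb: "\<And>u. \<bar>h (cis u)\<bar> \<le> M" shows "ennreal (om h x) = modcont h \<bar>x\<bar>"
proof -
  have "modcont h \<bar>x\<bar> < \<infinity>" using mc_fin[of h M, OF Mb, of "\<bar>x\<bar>"] by (simp add: le_less_trans)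
  then show ?thesis unfolding om_def by simp
qed

lemma om_le: assumes Mb: "\<And>u. \<bar>h (cis u)\<bar> \<le> M" shows "om h x \<le> 2*M"
proof -
  have "0 \<le> M" using Mb[of 0] by linarith
  have "ennreal (om h x) \<le> ennreal (2*M)" using mc_fin[of h M, OF Mb] om_eq[of h M, OF Mb] by metis
  then show ?thesis using \<open>0 \<le> M\<close> by simp
qed

lemma om_bound: assumes Mb: "\<And>u. \<bar>h (cis u)\<bar> \<le> M" shows "\<bar>h (cis a) - h (cis b)\<bar> \<le> om h (a - b)"
proof -
  have "ennreal \<bar>h (cis a) - h (cis b)\<bar> \<le> modcont h \<bar>a - b\<bar>" by (rule mc_ge) simp
  then have "ennreal \<bar>h (cis a) - h (cis b)\<bar> \<le> ennreal (om h (a - b))" using om_eq[of h M, OF Mb] by metis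
  then show ?thesis using om_nonneg by (simp add: ennreal_le_iff)
qed

lemma om_meas: assumes Mb: "\<And>u. \<bar>h (cis u)\<bar> \<le> M" shows "om h \<in> borel_measurable borel"
proof -
  have "mono (\<lambda>t. enn2real (modcont h t))"
  proof (rule monoI)
    fix s t :: real assume "s \<le> t"
    then have "modcont h s \<le> modcont h t" using mc_mono[of h] by (simp add: mono_def)
    moreover have "modcont h t < \<infinity>" using mc_fin[of h M, OF Mb, of t] by (simp add: le_less_trans)
    ultimately show "enn2real (modcont h s) \<le> enn2real (modcont h t)" by (intro enn2real_mono) auto
  qed
  then have m: "(\<lambda>t. enn2real (modcont h t)) \<in> borel_measurable borel" by (rule borel_measurable_mono)
  have "(\<lambda>x. (\<lambda>t. enn2real (modcont h t)) \<bar>x\<bar>) \<in> borel_measurable borel"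
    by (rule measurable_compose[OF _ m]) simp
  then show ?thesis unfolding om_def[abs_def] by simp
qed

lemma om_int:
  assumes dini: "dini_continuous h" and Mb: "\<And>u. \<bar>h (cis u)\<bar> \<le> M"
  shows "integrable lborel (\<lambda>x. indicator {-pi..pi} x * (om h x / \<bar>x\<bar>))"
proof -
  have om_m[measurable]: "om h \<in> borel_measurable borel" by (rule om_meas[of h M, OF Mb])
  define g where "g x = indicator {0<..pi} x * (om h x / x)" for x :: real
  have g_m[measurable]: "g \<in> borel_measurable borel" unfolding g_def by measurable
  have g0: "0 \<le> g x" for x unfolding g_def by (auto simp: om_nonneg split: split_indicator)
  have omev: "om h (-x) = om h x" for x unfolding om_def by simp
  have split: "indicator {-pi..pi} x * (om h x / \<bar>x\<bar>) = g x + g (-x)" for x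
    unfolding g_def using pi_gt_zero
    by (cases "x = 0") (auto simp: omev split: split_indicator)
  have gfin: "(\<integral>\<^sup>+ x. ennreal (g x) \<partial>lborel) < \<infinity>"
  proof -
    have "(\<integral>\<^sup>+ x. ennreal (g x) \<partial>lborel) = (\<integral>\<^sup>+ t. indicator {0<..pi} t * (modcont h t / ennreal t) \<partial>lborel)"
    proof (rule nn_integral_cong)
      fix t :: real
      show "ennreal (g t) = indicator {0<..pi} t * (modcont h t / ennreal t)"
      proof (cases "t \<in> {0<..pi}")
        case True
        then have "ennreal (om h t / t) = ennreal (om h t) / ennreal t"
          by (simp add: divide_ennreal om_nonneg)
        also have "\<dots> = modcont h t / ennreal t" using om_eq[of h M, OF Mb, of t] True by simp
        finally show ?thesis unfolding g_def using True by simp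
      qed (simp add: g_def)
    qed
    also have "\<dots> < \<infinity>" using dini unfolding dini_continuous_def .
    finally show ?thesis .
  qed
  have gref: "(\<integral>\<^sup>+ x. ennreal (g (-x)) \<partial>lborel) = (\<integral>\<^sup>+ x. ennreal (g x) \<partial>lborel)"
    using nn_integral_real_affine[of "\<lambda>x. ennreal (g x)" "-1" 0] by simp
  have "(\<integral>\<^sup>+ x. ennreal (norm (indicator {-pi..pi} x * (om h x / \<bar>x\<bar>))) \<partial>lborel)
      = (\<integral>\<^sup>+ x. ennreal (g x) + ennreal (g (-x)) \<partial>lborel)"
  proof (intro nn_integral_cong)
    fix x :: real
    have "norm (indicator {-pi..pi} x * (om h x / \<bar>x\<bar>)) = g x + g (-x)"
      unfolding split real_norm_def using g0[of x] g0[of "-x"] by simp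
    then show "ennreal (norm (indicator {-pi..pi} x * (om h x / \<bar>x\<bar>))) = ennreal (g x) + ennreal (g (-x))"
      using g0[of x] g0[of "-x"] by (simp add: ennreal_plus)
  qed
  also have "\<dots> = (\<integral>\<^sup>+ x. ennreal (g x) \<partial>lborel) + (\<integral>\<^sup>+ x. ennreal (g (-x)) \<partial>lborel)"
    by (rule nn_integral_add) auto
  also have "\<dots> < \<infinity>" using gfin gref by (simp add: ennreal_add_less_top)
  finally show ?thesis
    by (intro integrableI_bounded) auto
qed

lemma kr_meas: "kr r \<in> borel_measurable borel"
  unfolding kr_def
  by (intro borel_measurable_divide borel_measurable_continuous_onI continuous_intros)

lemma kr_lim_top:
  assumes "\<bar>x\<bar> \<le> pi" "x \<noteq> 0"
  shows "((\<lambda>t. kr (1 - inverse t) x) \<longlongrightarrow> kr 1 x) at_top"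
proof -
  have "\<bar>x\<bar> / 5 \<le> cmod (cis (-x) - complex_of_real 1)" by (rule den_bound) (use assms in auto)
  moreover have "0 < \<bar>x\<bar> / 5" using assms by simp
  ultimately have nz: "cis (-x) - complex_of_real 1 \<noteq> 0" by auto
  have i: "((\<lambda>t::real. inverse t) \<longlongrightarrow> 0) at_top"
    by (rule tendsto_inverse_0_at_top[OF filterlim_ident])
  have "((\<lambda>t. (cis (-x) + complex_of_real (1 - inverse t)) / (cis (-x) - complex_of_real (1 - inverse t)))
      \<longlongrightarrow> (cis (-x) + complex_of_real (1 - 0)) / (cis (-x) - complex_of_real (1 - 0))) at_top"
    using nz by (intro tendsto_intros i) auto
  then show ?thesis unfolding kr_def by simp
qed

definition Er :: "(complex \<Rightarrow> real) \<Rightarrow> real \<Rightarrow> real" where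
  "Er h r = (LINT x:{-pi..pi}|lebesgue. cmod (kr r x - kr 1 x) * om h x)"

lemma kr_diff_bound:
  assumes "1/2 \<le> r" "r \<le> 1" "\<bar>x\<bar> \<le> pi" "x \<noteq> 0"
  shows "cmod (kr r x - kr 1 x) \<le> 20 / \<bar>x\<bar>"
proof -
  have "cmod (kr r x - kr 1 x) \<le> cmod (kr r x) + cmod (kr 1 x)" by (rule norm_triangle_ineq4)
  also have "\<dots> \<le> 10 / \<bar>x\<bar> + 10 / \<bar>x\<bar>"
    by (intro add_mono kr_bound) (use assms in auto)
  finally show ?thesis by simp
qed

lemma Er_small:
  assumes dini: "dini_continuous h" and Mb: "\<And>u. \<bar>h (cis u)\<bar> \<le> M" and e: "e > 0"
  shows "\<exists>r0<1. \<forall>r. r0 \<le> r \<and> r < 1 \<longrightarrow> Er h r \<le> e"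
proof -
  have om_m[measurable]: "om h \<in> borel_measurable borel" by (rule om_meas[of h M, OF Mb])
  have kr_m[measurable]: "kr r \<in> borel_measurable borel" for r by (rule kr_meas)
  define s where "s t x = indicator {-pi..pi} x * (cmod (kr (1 - inverse t) x - kr 1 x) * om h x)" for t x
  define w where "w x = 20 * (indicator {-pi..pi} x * (om h x / \<bar>x\<bar>))" for x :: real
  have s_m: "s t \<in> borel_measurable lborel" for t unfolding s_def by measurable
  have w_i: "integrable lborel w" unfolding w_def
    by (intro integrable_mult_right om_int[OF dini Mb])
  have lim: "AE x in lborel. ((\<lambda>t. s t x) \<longlongrightarrow> 0) at_top"
    using AE_lborel_singleton[of 0]
  proof eventually_elim
    fix x :: real assume x: "x \<noteq> 0"
    show "((\<lambda>t. s t x) \<longlongrightarrow> 0) at_top"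
    proof (cases "x \<in> {-pi..pi}")
      case True
      have "((\<lambda>t. cmod (kr (1 - inverse t) x - kr 1 x) * om h x) \<longlongrightarrow> cmod (kr 1 x - kr 1 x) * om h x) at_top"
        using True x by (intro tendsto_intros kr_lim_top) auto
      then show ?thesis unfolding s_def using True by simp
    qed (simp add: s_def)
  qed
  have bound: "\<forall>\<^sub>F t in at_top. AE x in lborel. norm (s t x) \<le> w x"
  proof (rule eventually_at_top_linorderI[of 2])
    fix t :: real assume t: "2 \<le> t"
    then have r: "1/2 \<le> 1 - inverse t" "1 - inverse t \<le> 1"
      by (auto simp: field_simps)
    show "AE x in lborel. norm (s t x) \<le> w x"
      using AE_lborel_singleton[of 0]
    proof eventually_elim
      fix x :: real assume x: "x \<noteq> 0"
      show "norm (s t x) \<le> w x"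
      proof (cases "x \<in> {-pi..pi}")
        case True
        have "cmod (kr (1 - inverse t) x - kr 1 x) * om h x \<le> 20 / \<bar>x\<bar> * om h x"
          using True x r by (intro mult_right_mono kr_diff_bound om_nonneg) auto
        then show ?thesis unfolding s_def w_def using True om_nonneg[of h x] by simp
      qed (simp add: s_def w_def)
    qed
  qed
  have "((\<lambda>t. integral\<^sup>L lborel (s t)) \<longlongrightarrow> integral\<^sup>L lborel (\<lambda>x. 0::real)) at_top"
    using integral_dominated_convergence_at_top[where f="\<lambda>x. 0::real" and s=s and w=w and M=lborel] s_m w_i lim bound by simp
  then have L: "((\<lambda>t. integral\<^sup>L lborel (s t)) \<longlongrightarrow> 0) at_top" by simp
  have E: "Er h (1 - inverse t) = integral\<^sup>L lborel (s t)" for t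
    unfolding Er_def set_lebesgue_integral_def s_def
    by (subst integral_completion) (auto)
  from L e have "\<forall>\<^sub>F t in at_top. dist (integral\<^sup>L lborel (s t)) 0 < e" by (rule tendstoD)
  then obtain T where T: "\<And>t. T \<le> t \<Longrightarrow> \<bar>integral\<^sup>L lborel (s t)\<bar> < e"
    by (auto simp: eventually_at_top_linorder)
  define T' where "T' = max T 1"
  show ?thesis
  proof (intro exI[of _ "1 - inverse T'"] conjI allI impI)
    show "1 - inverse T' < 1" unfolding T'_def by simp
    fix r assume r: "1 - inverse T' \<le> r \<and> r < 1"
    define t where "t = inverse (1 - r)"
    have T'pos: "0 < T'" unfolding T'_def by simp
    have "inverse (1 - r) \<ge> T'"
    proof -
      have "1 - r \<le> inverse T'" using r by simp
      then have "inverse (inverse T') \<le> inverse (1 - r)"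
        using r T'pos by (intro le_imp_inverse_le) auto
      then show ?thesis using T'pos by simp
    qed
    then have tT: "T \<le> t" unfolding t_def T'_def by simp
    have "1 - inverse t = r" unfolding t_def using r by simp
    then have "Er h r = integral\<^sup>L lborel (s t)" using E[of t] by simp
    then show "Er h r \<le> e" using T[OF tT] by simp
  qed
qed

lemma setint_dom:
  fixes g :: "real \<Rightarrow> 'b::{banach, second_countable_topology}"
  assumes gm: "g \<in> borel_measurable borel" and Bi: "integrable lborel (\<lambda>x. indicator {-pi..pi} x * B x)"
    and bd: "AE x in lborel. x \<in> {-pi..pi} \<longrightarrow> norm (g x) \<le> B x"
  shows "set_integrable lebesgue {-pi..pi} g"
proof -
  have m: "(\<lambda>x. indicator {-pi..pi} x *\<^sub>R g x) \<in> borel_measurable lborel" using gm by measurable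
  have "integrable lborel (\<lambda>x. indicator {-pi..pi} x *\<^sub>R g x)"
  proof (rule Bochner_Integration.integrable_bound[OF Bi m])
    show "AE x in lborel. norm (indicator {-pi..pi} x *\<^sub>R g x) \<le> norm (indicator {-pi..pi} x * B x)"
      using bd by eventually_elim (auto split: split_indicator)
  qed
  then show ?thesis unfolding set_integrable_def using integrable_completion[OF m] by blast
qed

definition hcc :: "(complex \<Rightarrow> real) \<Rightarrow> real \<Rightarrow> complex" where
  "hcc h u = complex_of_real (h (cis u))"

definition Bb :: "(complex \<Rightarrow> real) \<Rightarrow> complex \<Rightarrow> complex" where
  "Bb h w = complex_of_real (h w) + complex_of_real (1/(2*pi)) *
     (LINT x:{-pi..pi}|lebesgue. kr 1 x * complex_of_real (h (w * cis (-x)) - h w))"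

lemma supp_in_I:
  assumes supp: "closure {z \<in> circT. h z \<noteq> 0} \<subseteq> (top_of_set circT) interior_of I"
    and "h (cis u) \<noteq> 0"
  shows "cis u \<in> I"
proof -
  have "cis u \<in> circT" unfolding circT_def by simp
  then have "cis u \<in> {z \<in> circT. h z \<noteq> 0}" using assms(2) by simp
  then have "cis u \<in> closure {z \<in> circT. h z \<noteq> 0}" by (rule subsetD[OF closure_subset])
  then have "cis u \<in> (top_of_set circT) interior_of I" by (rule subsetD[OF supp])
  then show ?thesis by (rule subsetD[OF interior_of_subset])
qed

lemma herg_Sop:
  assumes supp: "closure {z \<in> circT. h z \<noteq> 0} \<subseteq> (top_of_set circT) interior_of I"
  shows "herglotz I h z = complex_of_real (1/(2*pi)) * Sop (hcc h) z"
proof -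
  have "(\<lambda>t. indicator (angles I) t *\<^sub>R ((cis t + z) / (cis t - z) * complex_of_real (h (cis t))))
      = (\<lambda>t. indicator {0..<2*pi} t *\<^sub>R (Kh t z * hcc h t))"
  proof (rule ext)
    fix t
    show "indicator (angles I) t *\<^sub>R ((cis t + z) / (cis t - z) * complex_of_real (h (cis t)))
      = indicator {0..<2*pi} t *\<^sub>R (Kh t z * hcc h t)"
    proof (cases "t \<in> angles I")
      case True
      then have "t \<in> {0..<2*pi}" unfolding angles_def by auto
      then show ?thesis using True by (simp add: Kh_def hcc_def)
    next
      case False
      show ?thesis
      proof (cases "t \<in> {0..<2*pi}")
        case True
        with False have "cis t \<notin> I" unfolding angles_def by auto
        then have "h (cis t) = 0" using supp_in_I[OF supp] by blast
        then show ?thesis using False by (simp add: hcc_def)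
      qed (use False in auto)
    qed
  qed
  then show ?thesis unfolding herglotz_def Sop_def set_lebesgue_integral_def by (simp only:)
qed

lemma hcc_cont: "dini_continuous h \<Longrightarrow> continuous_on UNIV (hcc h)"
  unfolding hcc_def by (intro continuous_intros continuous_on_compose2[OF continuous_on_of_real] dini_cont) auto

lemma hcc_per: "hcc h (x + 2*pi) = hcc h x"
  unfolding hcc_def by (simp add: cis_2pi_shift)

lemma om_even: "om h (-x) = om h x" unfolding om_def by simp

lemma F3:
  assumes dini: "dini_continuous h" and Mb: "\<And>u. \<bar>h (cis u)\<bar> \<le> M"
    and supp: "closure {z \<in> circT. h z \<noteq> 0} \<subseteq> (top_of_set circT) interior_of I"
    and th: "-pi \<le> \<theta>" "\<theta> \<le> pi" and r: "1/2 \<le> r" "r < 1"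
  shows "norm (herglotz I h (complex_of_real r * cis \<theta>) - Bb h (cis \<theta>)) \<le> Er h r / (2*pi)"
proof -
  have hc: "continuous_on UNIV (\<lambda>u. h (cis u))" by (rule dini_cont[OF dini])
  have hm[measurable]: "(\<lambda>u. h (cis u)) \<in> borel_measurable borel" by (rule borel_measurable_continuous_onI[OF hc])
  have hm2[measurable]: "(\<lambda>x. h (cis (\<theta> - x))) \<in> borel_measurable borel"
    using measurable_compose[OF _ hm, of "\<lambda>x. \<theta> - x" borel] by simp
  have om_m[measurable]: "om h \<in> borel_measurable borel" by (rule om_meas[of h M, OF Mb])
  have kr_m[measurable]: "kr s \<in> borel_measurable borel" for s by (rule kr_meas)
  have hcc_c: "continuous_on UNIV (hcc h)" by (rule hcc_cont[OF dini])
  have r0: "0 \<le> r" using r by simp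
  define c where "c = complex_of_real (h (cis \<theta>))"
  define a where "a x = kr r x * hcc h (\<theta> - x)" for x
  define d where "d x = kr 1 x * complex_of_real (h (cis (\<theta> - x)) - h (cis \<theta>))" for x
  define D where "D x = (kr r x - kr 1 x) * complex_of_real (h (cis (\<theta> - x)) - h (cis \<theta>))" for x
  have ia: "set_integrable lebesgue {-pi..pi} a"
    unfolding a_def
    by (rule cont_setint_sym(1)) (intro continuous_intros kr_cont[OF r0 r(2)] continuous_on_compose2[OF hcc_c], auto)
  have ib: "set_integrable lebesgue {-pi..pi} (kr r)"
    by (rule cont_setint_sym(1)) (rule kr_cont[OF r0 r(2)])
  have Bi10: "integrable lborel (\<lambda>x. indicator {-pi..pi} x * (10 * (om h x / \<bar>x\<bar>)))"
    using integrable_mult_right[OF om_int[OF dini Mb], of 10] by (simp add: mult.left_commute)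
  have Bi20: "integrable lborel (\<lambda>x. indicator {-pi..pi} x * (20 * (om h x / \<bar>x\<bar>)))"
    using integrable_mult_right[OF om_int[OF dini Mb], of 20] by (simp add: mult.left_commute)
  have hb: "\<bar>h (cis (\<theta> - x)) - h (cis \<theta>)\<bar> \<le> om h x" for x
    using om_bound[of h M, OF Mb, of "\<theta> - x" \<theta>] by (simp add: om_even)
  have id: "set_integrable lebesgue {-pi..pi} d"
  proof (rule setint_dom[OF _ Bi10])
    show "d \<in> borel_measurable borel" unfolding d_def by measurable
    show "AE x in lborel. x \<in> {-pi..pi} \<longrightarrow> norm (d x) \<le> 10 * (om h x / \<bar>x\<bar>)"
      using AE_lborel_singleton[of 0]
    proof eventually_elim
      fix x :: real assume x0: "x \<noteq> 0"
      show "x \<in> {-pi..pi} \<longrightarrow> norm (d x) \<le> 10 * (om h x / \<bar>x\<bar>)"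
      proof
        assume x: "x \<in> {-pi..pi}"
        have "norm (d x) = cmod (kr 1 x) * \<bar>h (cis (\<theta> - x)) - h (cis \<theta>)\<bar>"
          unfolding d_def by (simp add: norm_mult del: of_real_diff)
        also have "\<dots> \<le> 10 / \<bar>x\<bar> * om h x"
          using x x0 by (intro mult_mono kr_bound hb) auto
        finally show "norm (d x) \<le> 10 * (om h x / \<bar>x\<bar>)" by simp
      qed
    qed
  qed
  have iE: "set_integrable lebesgue {-pi..pi} (\<lambda>x. cmod (kr r x - kr 1 x) * om h x)"
  proof (rule setint_dom[OF _ Bi20])
    show "(\<lambda>x. cmod (kr r x - kr 1 x) * om h x) \<in> borel_measurable borel" by measurable
    show "AE x in lborel. x \<in> {-pi..pi} \<longrightarrow> norm (cmod (kr r x - kr 1 x) * om h x) \<le> 20 * (om h x / \<bar>x\<bar>)"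
      using AE_lborel_singleton[of 0]
    proof eventually_elim
      fix x :: real assume x0: "x \<noteq> 0"
      show "x \<in> {-pi..pi} \<longrightarrow> norm (cmod (kr r x - kr 1 x) * om h x) \<le> 20 * (om h x / \<bar>x\<bar>)"
      proof
        assume x: "x \<in> {-pi..pi}"
        have "cmod (kr r x - kr 1 x) * om h x \<le> 20 / \<bar>x\<bar> * om h x"
          using x x0 r by (intro mult_right_mono kr_diff_bound om_nonneg) auto
        then show "norm (cmod (kr r x - kr 1 x) * om h x) \<le> 20 * (om h x / \<bar>x\<bar>)"
          using om_nonneg[of h x] by simp
      qed
    qed
  qed
  have pw: "a x - c * kr r x - d x = D x" for x
    unfolding a_def c_def d_def D_def hcc_def by (simp add: algebra_simps)
  have iD: "set_integrable lebesgue {-pi..pi} D"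
  proof -
    have "set_integrable lebesgue {-pi..pi} (\<lambda>x. a x - c * kr r x - d x)"
      by (intro set_integral_diff(1) ia id set_integrable_mult_right ib)
    then show ?thesis unfolding pw .
  qed
  have LD: "(LINT x:{-pi..pi}|lebesgue. D x) = (LINT x:{-pi..pi}|lebesgue. a x) - c * (LINT x:{-pi..pi}|lebesgue. kr r x) - (LINT x:{-pi..pi}|lebesgue. d x)"
  proof -
    have i1: "set_integrable lebesgue {-pi..pi} (\<lambda>x. c * kr r x)" by (intro set_integrable_mult_right ib)
    have i2: "set_integrable lebesgue {-pi..pi} (\<lambda>x. a x - c * kr r x)" by (intro set_integral_diff(1) ia i1)
    have "(LINT x:{-pi..pi}|lebesgue. D x) = (LINT x:{-pi..pi}|lebesgue. a x - c * kr r x - d x)"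
      unfolding pw ..
    also have "\<dots> = (LINT x:{-pi..pi}|lebesgue. a x - c * kr r x) - (LINT x:{-pi..pi}|lebesgue. d x)"
      by (rule set_integral_diff(2)[OF i2 id])
    also have "(LINT x:{-pi..pi}|lebesgue. a x - c * kr r x) = (LINT x:{-pi..pi}|lebesgue. a x) - (LINT x:{-pi..pi}|lebesgue. c * kr r x)"
      by (rule set_integral_diff(2)[OF ia i1])
    also have "(LINT x:{-pi..pi}|lebesgue. c * kr r x) = c * (LINT x:{-pi..pi}|lebesgue. kr r x)"
      by (rule set_integral_mult_right)
    finally show ?thesis .
  qed
  have Sa: "Sop (hcc h) (complex_of_real r * cis \<theta>) = (LINT x:{-pi..pi}|lebesgue. a x)"
    unfolding a_def by (rule Sop_conv[OF hcc_c hcc_per r0 r(2) th])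
  have Sb: "(LINT x:{-pi..pi}|lebesgue. kr r x) = 2*pi"
  proof -
    have z: "norm (complex_of_real r * cis \<theta>) < 1" using r by (simp add: norm_mult)
    have "Sop (\<lambda>_. 1) (complex_of_real r * cis \<theta>) = (LINT x:{-pi..pi}|lebesgue. kr r x * 1)"
      by (rule Sop_conv[OF _ _ r0 r(2) th]) auto
    then show ?thesis using Sop_one[OF z] by simp
  qed
  have Bbe: "Bb h (cis \<theta>) = c + complex_of_real (1/(2*pi)) * (LINT x:{-pi..pi}|lebesgue. d x)"
  proof -
    have "cis \<theta> * cis (-x) = cis (\<theta> - x)" for x by (simp add: cis_mult)
    then show ?thesis unfolding Bb_def c_def d_def by simp
  qed
  have "herglotz I h (complex_of_real r * cis \<theta>) - Bb h (cis \<theta>)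
      = complex_of_real (1/(2*pi)) * (LINT x:{-pi..pi}|lebesgue. D x)"
  proof -
    have pz: "complex_of_real pi \<noteq> 0" by simp
    show ?thesis unfolding herg_Sop[OF supp] Sa Bbe LD Sb
      using pz by (simp add: field_simps)
  qed
  also have "norm \<dots> \<le> Er h r / (2*pi)"
  proof -
    have "norm (LINT x:{-pi..pi}|lebesgue. D x) \<le> (LINT x:{-pi..pi}|lebesgue. norm (D x))"
      by (rule set_integral_norm_bound[OF iD])
    also have "\<dots> \<le> (LINT x:{-pi..pi}|lebesgue. cmod (kr r x - kr 1 x) * om h x)"
    proof (rule set_integral_mono[OF set_integrable_norm[OF iD] iE])
      fix x
      have "norm (D x) = cmod (kr r x - kr 1 x) * \<bar>h (cis (\<theta> - x)) - h (cis \<theta>)\<bar>"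
        unfolding D_def by (simp add: norm_mult del: of_real_diff)
      also have "\<dots> \<le> cmod (kr r x - kr 1 x) * om h x" by (intro mult_left_mono hb) auto
      finally show "norm (D x) \<le> cmod (kr r x - kr 1 x) * om h x" .
    qed
    finally have "norm (LINT x:{-pi..pi}|lebesgue. D x) \<le> Er h r" unfolding Er_def .
    then have "norm (LINT x:{-pi..pi}|lebesgue. D x) / (2*pi) \<le> Er h r / (2*pi)"
      by (simp add: divide_right_mono)
    moreover have "norm (complex_of_real (1/(2*pi)) * (LINT x:{-pi..pi}|lebesgue. D x)) = norm (LINT x:{-pi..pi}|lebesgue. D x) / (2*pi)"
    proof -
      have "norm (complex_of_real (1/(2*pi))) = \<bar>1/(2*pi)\<bar>" by (rule norm_of_real)
      also have "\<dots> = 1/(2*pi)" by simp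
      finally have "norm (complex_of_real (1/(2*pi))) = 1/(2*pi)" .
      then show ?thesis by (simp only: norm_mult) simp
    qed
    ultimately show ?thesis by simp
  qed
  finally show ?thesis .
qed

lemma unif_approx_cont:
  fixes f :: "'a::metric_space \<Rightarrow> 'b::metric_space"
  assumes "\<And>e. e > 0 \<Longrightarrow> \<exists>g. continuous_on S g \<and> (\<forall>x\<in>S. dist (f x) (g x) \<le> e)"
  shows "continuous_on S f"
  unfolding continuous_on_iff
proof (intro ballI allI impI)
  fix x e assume x: "x \<in> S" and e: "(e::real) > 0"
  obtain g where g: "continuous_on S g" "\<And>y. y \<in> S \<Longrightarrow> dist (f y) (g y) \<le> e/3"
    using assms[of "e/3"] e by auto
  obtain d where d: "d > 0" "\<And>y. y \<in> S \<Longrightarrow> dist y x < d \<Longrightarrow> dist (g y) (g x) < e/3"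
    using g(1) x e unfolding continuous_on_iff by (metis divide_pos_pos zero_less_numeral)
  show "\<exists>d>0. \<forall>x'\<in>S. dist x' x < d \<longrightarrow> dist (f x') (f x) < e"
  proof (intro exI[of _ d] conjI ballI impI)
    fix y assume y: "y \<in> S" "dist y x < d"
    have "dist (f y) (f x) \<le> dist (f y) (g y) + dist (g y) (g x) + dist (g x) (f x)"
      using dist_triangle[of "f y" "f x" "g y"] dist_triangle[of "g y" "f x" "g x"] by linarith
    also have "\<dots> < e/3 + e/3 + e/3"
      using g(2)[OF y(1)] d(2)[OF y] g(2)[OF x] by (simp add: dist_commute)
    finally show "dist (f y) (f x) < e" by simp
  qed (rule d(1))
qed

lemma sphere_cis: assumes "norm w = 1" shows "w = cis (Arg w)" "-pi \<le> Arg w" "Arg w \<le> pi"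
proof -
  have "w \<noteq> 0" using assms by auto
  then show "w = cis (Arg w)" using assms by (simp add: cis_Arg sgn_div_norm)
  show "-pi \<le> Arg w" "Arg w \<le> pi" using Arg_bounded[of w] by auto
qed

lemma herg_cont:
  assumes dini: "dini_continuous h" and Mb: "\<And>u. \<bar>h (cis u)\<bar> \<le> M"
    and supp: "closure {z \<in> circT. h z \<noteq> 0} \<subseteq> (top_of_set circT) interior_of I"
  shows "continuous_on (ball 0 1) (herglotz I h)"
proof -
  have M0: "0 \<le> M" using Mb[of 0] by linarith
  have hb: "norm (hcc h u) \<le> M" for u unfolding hcc_def using Mb[of u] by simp
  have cb: "continuous_on (cball 0 \<rho>) (herglotz I h)" if \<rho>: "0 \<le> \<rho>" "\<rho> < 1" for \<rho>
  proof (rule unif_approx_cont)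
    fix e :: real assume e: "e > 0"
    have "(\<lambda>N. 2 * \<rho>^N / (1 - \<rho>) * M) \<longlonglongrightarrow> 2 * 0 / (1 - \<rho>) * M"
      using \<rho> by (intro tendsto_intros LIMSEQ_power_zero) auto
    then have "eventually (\<lambda>N. dist (2 * \<rho>^N / (1 - \<rho>) * M) 0 < e) sequentially"
      using e by (intro tendstoD) auto
    then obtain N where N0: "dist (2 * \<rho>^N / (1 - \<rho>) * M) 0 < e"
      by (auto simp: eventually_sequentially)
    then have N: "2 * \<rho>^N / (1 - \<rho>) * M < e"
      unfolding dist_real_def by linarith
    define g where "g z = complex_of_real (1/(2*pi)) * (- coef (hcc h) 0 + 2 * (\<Sum>n<N. coef (hcc h) n * z^n))" for z
    show "\<exists>g. continuous_on (cball 0 \<rho>) g \<and> (\<forall>x\<in>cball 0 \<rho>. dist (herglotz I h x) (g x) \<le> e)"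
    proof (intro exI[of _ g] conjI ballI)
      show "continuous_on (cball 0 \<rho>) g" unfolding g_def by (intro continuous_intros)
      fix z :: complex assume z: "z \<in> cball 0 \<rho>"
      then have nz: "norm z \<le> \<rho>" by simp
      then have z1: "norm z < 1" using \<rho> by simp
      have "norm (Sop (hcc h) z - (- coef (hcc h) 0 + 2 * (\<Sum>n<N. coef (hcc h) n * z^n))) \<le> 2*pi*(2 * norm z^N / (1 - norm z) * M)"
        by (rule Sop_approx[OF z1 hcc_cont[OF dini] hb])
      also have "\<dots> \<le> 2*pi*(2 * \<rho>^N / (1 - \<rho>) * M)"
      proof -
        have "norm z ^ N \<le> \<rho>^N" using nz by (intro power_mono) auto
        moreover have "1 - \<rho> \<le> 1 - norm z" using nz by simp
        ultimately have "2 * norm z^N / (1 - norm z) \<le> 2 * \<rho>^N / (1 - \<rho>)"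
          using \<rho> by (intro frac_le) auto
        then show ?thesis using M0 by (intro mult_left_mono mult_right_mono) auto
      qed
      finally have "norm (Sop (hcc h) z - (- coef (hcc h) 0 + 2 * (\<Sum>n<N. coef (hcc h) n * z^n))) / (2*pi) \<le> 2 * \<rho>^N / (1 - \<rho>) * M"
        by (simp add: field_simps)
      moreover have "dist (herglotz I h z) (g z) = norm (Sop (hcc h) z - (- coef (hcc h) 0 + 2 * (\<Sum>n<N. coef (hcc h) n * z^n))) / (2*pi)"
      proof -
        have "herglotz I h z - g z = complex_of_real (1/(2*pi)) * (Sop (hcc h) z - (- coef (hcc h) 0 + 2 * (\<Sum>n<N. coef (hcc h) n * z^n)))"
          unfolding herg_Sop[OF supp] g_def by (simp add: algebra_simps)
        moreover have "norm (complex_of_real (1/(2*pi))) = 1/(2*pi)"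
        proof -
          have "norm (complex_of_real (1/(2*pi))) = \<bar>1/(2*pi)\<bar>" by (rule norm_of_real)
          then show ?thesis by simp
        qed
        ultimately show ?thesis unfolding dist_norm by (simp only: norm_mult) simp
      qed
      ultimately show "dist (herglotz I h z) (g z) \<le> e" using N by simp
    qed
  qed
  show ?thesis
    unfolding continuous_on_eq_continuous_at[OF open_ball]
  proof
    fix z :: complex assume "z \<in> ball 0 1"
    then have z: "norm z < 1" by simp
    define \<rho> where "\<rho> = (1 + norm z) / 2"
    have \<rho>: "0 \<le> \<rho>" "\<rho> < 1" "norm z < \<rho>" unfolding \<rho>_def using z by auto
    have "z \<in> interior (cball 0 \<rho>)" using \<rho> by simp
    then show "isCont (herglotz I h) z"
      using cb[OF \<rho>(1,2)] by (metis continuous_on_interior)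
  qed
qed

lemma Bb_approx:
  assumes dini: "dini_continuous h" and Mb: "\<And>u. \<bar>h (cis u)\<bar> \<le> M"
    and supp: "closure {z \<in> circT. h z \<noteq> 0} \<subseteq> (top_of_set circT) interior_of I"
    and e: "e > 0"
  shows "\<exists>r0<1. \<forall>r w. r0 \<le> r \<and> r < 1 \<and> norm w = 1 \<longrightarrow> norm (herglotz I h (complex_of_real r * w) - Bb h w) \<le> e"
proof -
  obtain r1 where r1: "r1 < 1" "\<And>r. r1 \<le> r \<and> r < 1 \<Longrightarrow> Er h r \<le> e * (2*pi)"
    using Er_small[OF dini Mb, of "e * (2*pi)"] e by auto
  show ?thesis
  proof (intro exI[of _ "max r1 (1/2)"] conjI allI impI)
    show "max r1 (1/2) < 1" using r1 by simp
    fix r and w :: complex assume a: "max r1 (1/2) \<le> r \<and> r < 1 \<and> norm w = 1"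
    then have w: "w = cis (Arg w)" "-pi \<le> Arg w" "Arg w \<le> pi" using sphere_cis by auto
    have "norm (herglotz I h (complex_of_real r * cis (Arg w)) - Bb h (cis (Arg w))) \<le> Er h r / (2*pi)"
      by (rule F3[OF dini Mb supp w(2,3)]) (use a in auto)
    also have "\<dots> \<le> e" using r1(2)[of r] a by (simp add: divide_simps)
    finally show "norm (herglotz I h (complex_of_real r * w) - Bb h w) \<le> e" using w(1) by simp
  qed
qed

lemma Bb_cont:
  assumes dini: "dini_continuous h" and Mb: "\<And>u. \<bar>h (cis u)\<bar> \<le> M"
    and supp: "closure {z \<in> circT. h z \<noteq> 0} \<subseteq> (top_of_set circT) interior_of I"
  shows "continuous_on (sphere 0 1) (Bb h)"
proof (rule unif_approx_cont)
  fix e :: real assume e: "e > 0"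
  obtain r0 where r0: "r0 < 1" "\<And>r w. r0 \<le> r \<and> r < 1 \<and> norm w = 1 \<Longrightarrow> norm (herglotz I h (complex_of_real r * w) - Bb h w) \<le> e"
    using Bb_approx[OF dini Mb supp e] by blast
  define r where "r = max r0 0"
  have r: "r0 \<le> r" "0 \<le> r" "r < 1" unfolding r_def using r0 by auto
  show "\<exists>g. continuous_on (sphere 0 1) g \<and> (\<forall>x\<in>sphere 0 1. dist (Bb h x) (g x) \<le> e)"
  proof (intro exI[of _ "\<lambda>w. herglotz I h (complex_of_real r * w)"] conjI ballI)
    show "continuous_on (sphere 0 1) (\<lambda>w. herglotz I h (complex_of_real r * w))"
    proof (rule continuous_on_compose2[OF herg_cont[OF dini Mb supp]])
      show "continuous_on (sphere 0 1) (\<lambda>w. complex_of_real r * w)" by (intro continuous_intros)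
      show "(\<lambda>w. complex_of_real r * w) ` sphere 0 1 \<subseteq> ball 0 1" using r by (auto simp: norm_mult)
    qed
    fix w :: complex assume "w \<in> sphere 0 1"
    then have "norm w = 1" by simp
    then show "dist (Bb h w) (herglotz I h (complex_of_real r * w)) \<le> e"
      using r0(2)[of r w] r by (simp add: dist_norm norm_minus_commute)
  qed
qed

definition Bf :: "complex set \<Rightarrow> (complex \<Rightarrow> real) \<Rightarrow> complex \<Rightarrow> complex" where
  "Bf I h z = (if norm z < 1 then herglotz I h z else Bb h z)"

lemma Bf_cont:
  assumes dini: "dini_continuous h" and Mb: "\<And>u. \<bar>h (cis u)\<bar> \<le> M"
    and supp: "closure {z \<in> circT. h z \<noteq> 0} \<subseteq> (top_of_set circT) interior_of I"
  shows "continuous_on (cball 0 1) (Bf I h)"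
  unfolding continuous_on_iff
proof (intro ballI allI impI)
  fix x :: complex and e :: real assume x: "x \<in> cball 0 1" and e: "e > 0"
  show "\<exists>d>0. \<forall>y\<in>cball 0 1. dist y x < d \<longrightarrow> dist (Bf I h y) (Bf I h x) < e"
  proof (cases "norm x < 1")
    case True
    have "isCont (herglotz I h) x"
      using herg_cont[OF dini Mb supp] True continuous_on_eq_continuous_at[OF open_ball, of 0 1 "herglotz I h"]
      by (simp add: mem_ball dist_norm)
    then obtain d1 where d1: "d1 > 0" "\<And>y. dist y x < d1 \<Longrightarrow> dist (herglotz I h y) (herglotz I h x) < e"
      using e unfolding continuous_at_eps_delta by blast
    show ?thesis
    proof (intro exI[of _ "min d1 (1 - norm x)"] conjI ballI impI)
      show "0 < min d1 (1 - norm x)" using d1 True by simp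
      fix y assume y: "y \<in> cball 0 1" "dist y x < min d1 (1 - norm x)"
      have "norm y \<le> norm x + dist y x" using norm_triangle_ineq[of x "y - x"] by (simp add: dist_norm)
      then have "norm y < 1" using y by simp
      then show "dist (Bf I h y) (Bf I h x) < e" unfolding Bf_def using True d1(2) y by simp
    qed
  next
    case False
    then have x1: "norm x = 1" using x by simp
    obtain r0 where r0: "r0 < 1" "\<And>r w. r0 \<le> r \<and> r < 1 \<and> norm w = 1 \<Longrightarrow> norm (herglotz I h (complex_of_real r * w) - Bb h w) \<le> e/3"
      using Bb_approx[OF dini Mb supp, of "e/3"] e by auto
    have cB: "continuous_on (sphere 0 1) (Bb h)" by (rule Bb_cont[OF dini Mb supp])
    have xs: "x \<in> sphere 0 1" using x1 by simp
    have "\<exists>d>0. \<forall>v\<in>sphere 0 1. dist v x < d \<longrightarrow> dist (Bb h v) (Bb h x) < e/3"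
      using cB[unfolded continuous_on_iff, rule_format, OF xs, of "e/3"] e by simp
    then obtain d1 where d1: "d1 > 0" "\<And>v. v \<in> sphere 0 1 \<Longrightarrow> dist v x < d1 \<Longrightarrow> dist (Bb h v) (Bb h x) < e/3"
      by blast
    define d where "d = min (d1/2) (1 - max r0 0)"
    have d0: "0 < d" unfolding d_def using d1 r0 by simp
    show ?thesis
    proof (intro exI[of _ d] conjI ballI impI d0)
      fix y assume y: "y \<in> cball 0 1" "dist y x < d"
      show "dist (Bf I h y) (Bf I h x) < e"
      proof (cases "norm y < 1")
        case False
        then have "norm y = 1" using y by simp
        moreover have "dist y x < d1" using y(2) zero_le_dist[of y x] unfolding d_def min_less_iff_conj by linarith
        ultimately have "dist (Bb h y) (Bb h x) < e/3" using d1(2)[of y] by simp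
        then show ?thesis unfolding Bf_def using False x1 e by simp
      next
        case True
        have ny: "1 - dist y x \<le> norm y"
          using norm_triangle_ineq2[of x y] x1 by (simp add: dist_norm norm_minus_commute)
        then have ny0: "max r0 0 < norm y" using y unfolding d_def by linarith
        then have y0: "y \<noteq> 0" by auto
        define v where "v = y / complex_of_real (norm y)"
        have v1: "norm v = 1" unfolding v_def using y0 by (simp add: norm_divide)
        have yv: "y = complex_of_real (norm y) * v" unfolding v_def using y0 by simp
        have "dist v y = 1 - norm y"
        proof -
          have "v - y = complex_of_real (1 - norm y) * v" using yv by (simp add: algebra_simps)
          moreover have "norm (complex_of_real (1 - norm y)) = 1 - norm y"
            using True by (simp only: norm_of_real)
          ultimately show ?thesis using v1 by (simp only: dist_norm norm_mult) simp
        qed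
        then have "dist v x \<le> (1 - norm y) + dist y x" using dist_triangle[of v x y] by simp
        also have "\<dots> \<le> 2 * dist y x" using ny by simp
        also have "\<dots> < d1" using y unfolding d_def by simp
        finally have vx: "dist v x < d1" .
        have a1: "norm (herglotz I h y - Bb h v) \<le> e/3"
          using r0(2)[of "norm y" v] ny0 True v1 yv by auto
        have a2: "dist (Bb h v) (Bb h x) < e/3" using d1(2)[OF _ vx] v1 by simp
        have "dist (herglotz I h y) (Bb h x) \<le> dist (herglotz I h y) (Bb h v) + dist (Bb h v) (Bb h x)"
          by (rule dist_triangle)
        also have "\<dots> < e/3 + e/3" using a1 a2 by (simp add: dist_norm)
        finally show ?thesis unfolding Bf_def using True x1 e by simp
      qed
    qed
  qed
qed

lemma bor_leb: "f \<in> borel_measurable borel \<Longrightarrow> (f :: real \<Rightarrow> 'a::topological_space) \<in> borel_measurable lebesgue"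
  by (rule measurable_completion) simp

lemma cont_bounded_Icc:
  fixes \<phi> :: "real \<Rightarrow> complex"
  assumes "continuous_on UNIV \<phi>"
  shows "\<exists>C\<ge>0. \<forall>t\<in>{0..<2*pi}. norm (\<phi> t) \<le> C"
proof -
  have "compact (\<phi> ` {0..2*pi})"
    by (intro compact_continuous_image continuous_on_subset[OF assms]) auto
  then obtain C where C: "\<And>y. y \<in> \<phi> ` {0..2*pi} \<Longrightarrow> norm y \<le> C"
    using compact_imp_bounded[of "\<phi> ` {0..2*pi}"] unfolding bounded_iff by blast
  have "0 \<le> C" using C[of "\<phi> 0"] by (meson atLeastAtMost_iff image_eqI norm_ge_zero order_trans pi_ge_zero mult_nonneg_nonneg zero_le_numeral order_refl)
  then show ?thesis using C by (intro exI[of _ C]) auto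
qed

lemma setint_mult_cont:
  fixes g \<phi> :: "real \<Rightarrow> complex"
  assumes g: "set_integrable lebesgue {0..<2*pi} g" and pc: "continuous_on UNIV \<phi>"
  shows "set_integrable lebesgue {0..<2*pi} (\<lambda>t. g t * \<phi> t)"
proof -
  obtain C where C: "C \<ge> 0" "\<And>t. t \<in> {0..<2*pi} \<Longrightarrow> norm (\<phi> t) \<le> C"
    using cont_bounded_Icc[OF pc] by blast
  have gi: "integrable lebesgue (\<lambda>t. indicator {0..<2*pi} t *\<^sub>R g t)" using g unfolding set_integrable_def .
  have pm: "\<phi> \<in> borel_measurable lebesgue" by (rule bor_leb[OF borel_measurable_continuous_onI[OF pc]])
  have m: "(\<lambda>t. indicator {0..<2*pi} t *\<^sub>R (g t * \<phi> t)) \<in> borel_measurable lebesgue"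
  proof -
    have "(\<lambda>t. (indicator {0..<2*pi} t *\<^sub>R g t) * \<phi> t) \<in> borel_measurable lebesgue"
      using borel_measurable_integrable[OF gi] pm by (rule borel_measurable_times)
    then show ?thesis by simp
  qed
  have "integrable lebesgue (\<lambda>t. indicator {0..<2*pi} t *\<^sub>R (g t * \<phi> t))"
  proof (rule Bochner_Integration.integrable_bound[OF _ m])
    show "integrable lebesgue (\<lambda>t. C * norm (indicator {0..<2*pi} t *\<^sub>R g t))"
      using gi by (intro integrable_mult_right integrable_norm)
    show "AE x in lebesgue. norm (indicator {0..<2*pi} x *\<^sub>R (g x * \<phi> x)) \<le> norm (C * norm (indicator {0..<2*pi} x *\<^sub>R g x))"
    proof (rule AE_I2)
      fix x
      show "norm (indicator {0..<2*pi} x *\<^sub>R (g x * \<phi> x)) \<le> norm (C * norm (indicator {0..<2*pi} x *\<^sub>R g x))"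
      proof (cases "x \<in> {0..<2*pi}")
        case True
        then show ?thesis using mult_right_mono[OF C(2)[OF True] norm_ge_zero[of "g x"]] C(1) by (simp add: norm_mult mult.commute)
      qed simp
    qed
  qed
  then show ?thesis unfolding set_integrable_def .
qed

definition Fz :: "(real \<Rightarrow> complex) \<Rightarrow> bool" where
  "Fz g \<longleftrightarrow> (\<forall>n::nat. n \<ge> 1 \<longrightarrow> (LINT t:{0..<2*pi}|lebesgue. g t * cis (real n * t)) = 0)"

definition Amult :: "(real \<Rightarrow> complex) \<Rightarrow> bool" where
  "Amult \<phi> \<longleftrightarrow> continuous_on UNIV \<phi> \<and>
     (\<forall>g. set_integrable lebesgue {0..<2*pi} g \<longrightarrow> Fz g \<longrightarrow> Fz (\<lambda>t. g t * \<phi> t))"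

lemma A_cis: "Amult (\<lambda>t. cis (real k * t))"
  unfolding Amult_def
proof (intro conjI allI impI)
  show "continuous_on UNIV (\<lambda>t. cis (real k * t))" by (intro continuous_intros)
  fix g assume g: "set_integrable lebesgue {0..<2*pi} g" "Fz g"
  show "Fz (\<lambda>t. g t * cis (real k * t))"
    unfolding Fz_def
  proof (intro allI impI)
    fix n :: nat assume "n \<ge> 1"
    then have "k + n \<ge> 1" by simp
    then have "(LINT t:{0..<2*pi}|lebesgue. g t * cis (real (k + n) * t)) = 0"
      using g(2) unfolding Fz_def by blast
    moreover have eqf: "(\<lambda>t. g t * cis (real k * t) * cis (real n * t)) = (\<lambda>t. g t * cis (real (k + n) * t))"
    proof
      fix t
      have "cis (real k * t) * cis (real n * t) = cis (real (k + n) * t)" by (simp add: cis_mult distrib_right)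
      then show "g t * cis (real k * t) * cis (real n * t) = g t * cis (real (k + n) * t)" by (simp add: mult.assoc)
    qed
    ultimately show "(LINT t:{0..<2*pi}|lebesgue. g t * cis (real k * t) * cis (real n * t)) = 0"
      by (simp only: eqf)
  qed
qed

lemma A_add: assumes "Amult \<phi>" "Amult \<psi>" shows "Amult (\<lambda>t. \<phi> t + \<psi> t)"
  unfolding Amult_def
proof (intro conjI allI impI)
  show "continuous_on UNIV (\<lambda>t. \<phi> t + \<psi> t)" using assms unfolding Amult_def by (auto intro: continuous_intros)
  fix g assume g: "set_integrable lebesgue {0..<2*pi} g" "Fz g"
  have f1: "Fz (\<lambda>t. g t * \<phi> t)" "Fz (\<lambda>t. g t * \<psi> t)" using assms g unfolding Amult_def by auto
  show "Fz (\<lambda>t. g t * (\<phi> t + \<psi> t))"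
    unfolding Fz_def
  proof (intro allI impI)
    fix n :: nat assume n: "n \<ge> 1"
    have i: "set_integrable lebesgue {0..<2*pi} (\<lambda>t. g t * \<phi> t * cis (real n * t))"
            "set_integrable lebesgue {0..<2*pi} (\<lambda>t. g t * \<psi> t * cis (real n * t))"
      using assms unfolding Amult_def
      by (auto intro!: setint_mult_cont g(1) continuous_intros)
    have "(LINT t:{0..<2*pi}|lebesgue. g t * (\<phi> t + \<psi> t) * cis (real n * t))
        = (LINT t:{0..<2*pi}|lebesgue. g t * \<phi> t * cis (real n * t) + g t * \<psi> t * cis (real n * t))"
      by (simp add: algebra_simps)
    also have "\<dots> = 0" using set_integral_add(2)[OF i] f1 n unfolding Fz_def by simp
    finally show "(LINT t:{0..<2*pi}|lebesgue. g t * (\<phi> t + \<psi> t) * cis (real n * t)) = 0" .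
  qed
qed

lemma A_cmult: assumes "Amult \<phi>" shows "Amult (\<lambda>t. c * \<phi> t)"
  unfolding Amult_def
proof (intro conjI allI impI)
  show "continuous_on UNIV (\<lambda>t. c * \<phi> t)" using assms unfolding Amult_def by (auto intro: continuous_intros)
  fix g assume g: "set_integrable lebesgue {0..<2*pi} g" "Fz g"
  have f1: "Fz (\<lambda>t. g t * \<phi> t)" using assms g unfolding Amult_def by auto
  show "Fz (\<lambda>t. g t * (c * \<phi> t))"
    unfolding Fz_def
  proof (intro allI impI)
    fix n :: nat assume n: "n \<ge> 1"
    have "(LINT t:{0..<2*pi}|lebesgue. g t * (c * \<phi> t) * cis (real n * t))
        = (LINT t:{0..<2*pi}|lebesgue. c * (g t * \<phi> t * cis (real n * t)))"
      by (simp add: algebra_simps)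
    also have "\<dots> = c * (LINT t:{0..<2*pi}|lebesgue. g t * \<phi> t * cis (real n * t))"
      by (rule set_integral_mult_right)
    also have "\<dots> = 0" using f1 n unfolding Fz_def by simp
    finally show "(LINT t:{0..<2*pi}|lebesgue. g t * (c * \<phi> t) * cis (real n * t)) = 0" .
  qed
qed

lemma A_mult: assumes "Amult \<phi>" "Amult \<psi>" shows "Amult (\<lambda>t. \<phi> t * \<psi> t)"
  unfolding Amult_def
proof (intro conjI allI impI)
  show "continuous_on UNIV (\<lambda>t. \<phi> t * \<psi> t)" using assms unfolding Amult_def by (auto intro: continuous_intros)
  fix g assume g: "set_integrable lebesgue {0..<2*pi} g" "Fz g"
  have f1: "Fz (\<lambda>t. g t * \<phi> t)" using assms g unfolding Amult_def by auto
  have i1: "set_integrable lebesgue {0..<2*pi} (\<lambda>t. g t * \<phi> t)"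
    using assms(1) unfolding Amult_def by (auto intro!: setint_mult_cont g(1))
  have "Fz (\<lambda>t. (g t * \<phi> t) * \<psi> t)" using assms(2) i1 f1 unfolding Amult_def by blast
  then show "Fz (\<lambda>t. g t * (\<phi> t * \<psi> t))" by (simp add: mult.assoc)
qed

lemma A_const: "Amult (\<lambda>t. c)"
  using A_cmult[OF A_cis[of 0], of c] by simp

lemma A_sum: "finite S \<Longrightarrow> (\<And>i. i \<in> S \<Longrightarrow> Amult (f i)) \<Longrightarrow> Amult (\<lambda>t. \<Sum>i\<in>S. f i t)"
proof (induction S rule: finite_induct)
  case empty
  then show ?case using A_const[of 0] by simp
next
  case (insert x F)
  then show ?case using A_add[of "f x" "\<lambda>t. \<Sum>i\<in>F. f i t"] by simp
qed

lemma A_pow: "Amult \<phi> \<Longrightarrow> Amult (\<lambda>t. \<phi> t ^ m)"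
proof (induction m)
  case 0 then show ?case using A_const[of 1] by simp
next
  case (Suc m) then show ?case using A_mult[of \<phi> "\<lambda>t. \<phi> t ^ m"] by simp
qed

lemma A_approx:
  assumes pc: "continuous_on UNIV \<phi>"
    and ap: "\<And>e. e > 0 \<Longrightarrow> \<exists>\<psi>. Amult \<psi> \<and> (\<forall>t\<in>{0..<2*pi}. norm (\<phi> t - \<psi> t) \<le> e)"
  shows "Amult \<phi>"
  unfolding Amult_def
proof (intro conjI allI impI pc)
  fix g assume g: "set_integrable lebesgue {0..<2*pi} g" "Fz g"
  show "Fz (\<lambda>t. g t * \<phi> t)"
    unfolding Fz_def
  proof (intro allI impI)
    fix n :: nat assume n: "n \<ge> 1"
    define X where "X = (LINT t:{0..<2*pi}|lebesgue. g t * \<phi> t * cis (real n * t))"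
    define G where "G = (LINT t:{0..<2*pi}|lebesgue. norm (g t))"
    have b: "norm X \<le> e * G" if e: "e > 0" for e
    proof -
      obtain \<psi> where \<psi>: "Amult \<psi>" "\<And>t. t \<in> {0..<2*pi} \<Longrightarrow> norm (\<phi> t - \<psi> t) \<le> e"
        using ap[OF e] by blast
      have psc: "continuous_on UNIV \<psi>" using \<psi>(1) unfolding Amult_def by simp
      have z: "(LINT t:{0..<2*pi}|lebesgue. g t * \<psi> t * cis (real n * t)) = 0"
        using \<psi>(1) g n unfolding Amult_def Fz_def by blast
      have i1: "set_integrable lebesgue {0..<2*pi} (\<lambda>t. g t * \<phi> t * cis (real n * t))"
        by (intro setint_mult_cont[where g="\<lambda>t. g t * \<phi> t"] setint_mult_cont g(1) pc continuous_intros)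
      have i2: "set_integrable lebesgue {0..<2*pi} (\<lambda>t. g t * \<psi> t * cis (real n * t))"
        by (intro setint_mult_cont[where g="\<lambda>t. g t * \<psi> t"] setint_mult_cont g(1) psc continuous_intros)
      have i3: "set_integrable lebesgue {0..<2*pi} (\<lambda>t. g t * (\<phi> t - \<psi> t) * cis (real n * t))"
        by (intro setint_mult_cont[where g="\<lambda>t. g t * (\<phi> t - \<psi> t)"] setint_mult_cont g(1) pc psc continuous_intros)
      have "X = (LINT t:{0..<2*pi}|lebesgue. g t * \<phi> t * cis (real n * t)) - (LINT t:{0..<2*pi}|lebesgue. g t * \<psi> t * cis (real n * t))"
        unfolding X_def z by simp
      also have "\<dots> = (LINT t:{0..<2*pi}|lebesgue. g t * (\<phi> t - \<psi> t) * cis (real n * t))"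
        by (subst set_integral_diff(2)[OF i1 i2, symmetric]) (simp add: algebra_simps)
      finally have "norm X \<le> (LINT t:{0..<2*pi}|lebesgue. norm (g t * (\<phi> t - \<psi> t) * cis (real n * t)))"
        using set_integral_norm_bound[OF i3] by simp
      also have "\<dots> \<le> (LINT t:{0..<2*pi}|lebesgue. e * norm (g t))"
      proof (rule set_integral_mono)
        show "set_integrable lebesgue {0..<2*pi} (\<lambda>t. norm (g t * (\<phi> t - \<psi> t) * cis (real n * t)))"
          by (rule set_integrable_norm[OF i3])
        show "set_integrable lebesgue {0..<2*pi} (\<lambda>t. e * norm (g t))"
          by (intro set_integrable_mult_right set_integrable_norm g(1))
        fix t assume t: "t \<in> {0..<2*pi}"
        show "norm (g t * (\<phi> t - \<psi> t) * cis (real n * t)) \<le> e * norm (g t)"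
          using mult_left_mono[OF \<psi>(2)[OF t] norm_ge_zero[of "g t"]] by (simp add: norm_mult mult.commute)
      qed
      also have "\<dots> = e * G" unfolding G_def by (rule set_integral_mult_right)
      finally show ?thesis .
    qed
    have G0: "0 \<le> G" unfolding G_def set_lebesgue_integral_def by (intro Bochner_Integration.integral_nonneg) (auto simp: indicator_def)
    have "norm X = 0"
    proof (rule ccontr)
      assume "norm X \<noteq> 0"
      then have Xp: "norm X > 0" by simp
      define e where "e = norm X / (2 * (G + 1))"
      have ep: "e > 0" unfolding e_def using Xp G0 by simp
      have "norm X \<le> e * G" by (rule b[OF ep])
      also have "\<dots> < norm X"
      proof -
        have "e * G = norm X * (G / (2 * (G + 1)))" unfolding e_def by simp
        also have "\<dots> < norm X * 1"
          using Xp G0 by (intro mult_strict_left_mono) (auto simp: divide_simps)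
        finally show ?thesis by simp
      qed
      finally show False by simp
    qed
    then show "(LINT t:{0..<2*pi}|lebesgue. g t * \<phi> t * cis (real n * t)) = 0"
      unfolding X_def by simp
  qed
qed

lemma A_powcis: "Amult (\<lambda>t. (complex_of_real r * cis t) ^ n)"
proof -
  have "(\<lambda>t. (complex_of_real r * cis t) ^ n) = (\<lambda>t. (complex_of_real r)^n * cis (real n * t))"
    by (simp add: power_mult_distrib Complex.DeMoivre)
  then show ?thesis using A_cmult[OF A_cis[of n], of "(complex_of_real r)^n"] by simp
qed

lemma herg_r_A:
  assumes dini: "dini_continuous h" and Mb: "\<And>u. \<bar>h (cis u)\<bar> \<le> M"
    and supp: "closure {z \<in> circT. h z \<noteq> 0} \<subseteq> (top_of_set circT) interior_of I"
    and r: "0 \<le> r" "r < 1"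
  shows "Amult (\<lambda>t. herglotz I h (complex_of_real r * cis t))"
proof (rule A_approx)
  show "continuous_on UNIV (\<lambda>t. herglotz I h (complex_of_real r * cis t))"
  proof (rule continuous_on_compose2[OF herg_cont[OF dini Mb supp]])
    show "continuous_on UNIV (\<lambda>t. complex_of_real r * cis t)" by (intro continuous_intros)
    show "(\<lambda>t. complex_of_real r * cis t) ` UNIV \<subseteq> ball 0 1" using r by (auto simp: norm_mult)
  qed
  fix e :: real assume e: "e > 0"
  have M0: "0 \<le> M" using Mb[of 0] by linarith
  have hb: "norm (hcc h u) \<le> M" for u unfolding hcc_def using Mb[of u] by simp
  have "(\<lambda>N. 2 * r^N / (1 - r) * M) \<longlonglongrightarrow> 2 * 0 / (1 - r) * M"
    using r by (intro tendsto_intros LIMSEQ_power_zero) auto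
  then have "eventually (\<lambda>N. dist (2 * r^N / (1 - r) * M) 0 < e) sequentially"
    using e by (intro tendstoD) auto
  then obtain N where N0: "dist (2 * r^N / (1 - r) * M) 0 < e"
    by (auto simp: eventually_sequentially)
  then have N: "2 * r^N / (1 - r) * M < e" unfolding dist_real_def by linarith
  define \<psi> where "\<psi> t = complex_of_real (1/(2*pi)) * (- coef (hcc h) 0 + 2 * (\<Sum>n<N. coef (hcc h) n * (complex_of_real r * cis t)^n))" for t
  show "\<exists>\<psi>. Amult \<psi> \<and> (\<forall>t\<in>{0..<2*pi}. norm (herglotz I h (complex_of_real r * cis t) - \<psi> t) \<le> e)"
  proof (intro exI[of _ \<psi>] conjI ballI)
    show "Amult \<psi>" unfolding \<psi>_def
      by (intro A_cmult A_add A_const A_sum A_powcis) auto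
    fix t :: real
    define z where "z = complex_of_real r * cis t"
    have nz: "norm z = r" unfolding z_def using r by (simp add: norm_mult)
    then have z1: "norm z < 1" using r by simp
    have "norm (Sop (hcc h) z - (- coef (hcc h) 0 + 2 * (\<Sum>n<N. coef (hcc h) n * z^n))) \<le> 2*pi*(2 * norm z^N / (1 - norm z) * M)"
      by (rule Sop_approx[OF z1 hcc_cont[OF dini] hb])
    then have a: "norm (Sop (hcc h) z - (- coef (hcc h) 0 + 2 * (\<Sum>n<N. coef (hcc h) n * z^n))) / (2*pi) \<le> 2 * r^N / (1 - r) * M"
      unfolding nz by (simp add: field_simps)
    have "herglotz I h z - \<psi> t = complex_of_real (1/(2*pi)) * (Sop (hcc h) z - (- coef (hcc h) 0 + 2 * (\<Sum>n<N. coef (hcc h) n * z^n)))"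
      unfolding herg_Sop[OF supp] \<psi>_def z_def by (simp add: algebra_simps)
    moreover have "norm (complex_of_real (1/(2*pi))) = 1/(2*pi)"
    proof -
      have "norm (complex_of_real (1/(2*pi))) = \<bar>1/(2*pi)\<bar>" by (rule norm_of_real)
      then show ?thesis by simp
    qed
    ultimately have "norm (herglotz I h z - \<psi> t) = norm (Sop (hcc h) z - (- coef (hcc h) 0 + 2 * (\<Sum>n<N. coef (hcc h) n * z^n))) / (2*pi)"
      by (simp only: norm_mult) simp
    then show "norm (herglotz I h (complex_of_real r * cis t) - \<psi> t) \<le> e"
      using a N unfolding z_def by simp
  qed
qed

lemma Bb_A:
  assumes dini: "dini_continuous h" and Mb: "\<And>u. \<bar>h (cis u)\<bar> \<le> M"
    and supp: "closure {z \<in> circT. h z \<noteq> 0} \<subseteq> (top_of_set circT) interior_of I"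
  shows "Amult (\<lambda>t. Bb h (cis t))"
proof (rule A_approx)
  show "continuous_on UNIV (\<lambda>t. Bb h (cis t))"
    by (rule continuous_on_compose2[OF Bb_cont[OF dini Mb supp]]) (auto intro!: continuous_intros)
  fix e :: real assume e: "e > 0"
  obtain r0 where r0: "r0 < 1" "\<And>r w. r0 \<le> r \<and> r < 1 \<and> norm w = 1 \<Longrightarrow> norm (herglotz I h (complex_of_real r * w) - Bb h w) \<le> e"
    using Bb_approx[OF dini Mb supp e] by blast
  define r where "r = max r0 0"
  have r: "r0 \<le> r" "0 \<le> r" "r < 1" unfolding r_def using r0 by auto
  show "\<exists>\<psi>. Amult \<psi> \<and> (\<forall>t\<in>{0..<2*pi}. norm (Bb h (cis t) - \<psi> t) \<le> e)"
  proof (intro exI[of _ "\<lambda>t. herglotz I h (complex_of_real r * cis t)"] conjI ballI)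
    show "Amult (\<lambda>t. herglotz I h (complex_of_real r * cis t))" by (rule herg_r_A[OF dini Mb supp r(2,3)])
    fix t :: real
    show "norm (Bb h (cis t) - herglotz I h (complex_of_real r * cis t)) \<le> e"
      using r0(2)[of r "cis t"] r by (simp add: norm_minus_commute)
  qed
qed

lemma geom_A:
  assumes A: "Amult b" and K: "\<And>t. norm (b t) \<le> K" and s: "\<bar>s\<bar> * K \<le> 1/2"
  shows "Amult (\<lambda>t. 1 / (1 - complex_of_real s * b t))"
proof -
  have q: "norm (complex_of_real s * b t) \<le> 1/2" for t
  proof -
    have "norm (complex_of_real s * b t) = \<bar>s\<bar> * norm (b t)" by (simp add: norm_mult)
    also have "\<dots> \<le> \<bar>s\<bar> * K" by (intro mult_left_mono K) auto
    finally show ?thesis using s by simp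
  qed
  have nz: "1 - complex_of_real s * b t \<noteq> 0" for t
  proof
    assume "1 - complex_of_real s * b t = 0"
    then have "complex_of_real s * b t = 1" by simp
    with q[of t] show False by simp
  qed
  show ?thesis
  proof (rule A_approx)
    show "continuous_on UNIV (\<lambda>t. 1 / (1 - complex_of_real s * b t))"
      using A nz unfolding Amult_def by (intro continuous_intros) auto
    fix e :: real assume e: "e > 0"
    have "(\<lambda>N. 2 * (1/2::real)^N) \<longlonglongrightarrow> 2 * 0"
      by (intro tendsto_intros LIMSEQ_power_zero) auto
    then have "eventually (\<lambda>N. dist (2 * (1/2::real)^N) 0 < e) sequentially"
      using e by (intro tendstoD) auto
    then obtain N where N0: "dist (2 * (1/2::real)^N) 0 < e"
      by (auto simp: eventually_sequentially)
    then have N: "2 * (1/2::real)^N < e" unfolding dist_real_def by simp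
    show "\<exists>\<psi>. Amult \<psi> \<and> (\<forall>t\<in>{0..<2*pi}. norm (1 / (1 - complex_of_real s * b t) - \<psi> t) \<le> e)"
    proof (intro exI[of _ "\<lambda>t. \<Sum>m<N. (complex_of_real s * b t)^m"] conjI ballI)
      show "Amult (\<lambda>t. \<Sum>m<N. (complex_of_real s * b t)^m)"
        by (intro A_sum A_pow A_cmult A) auto
      fix t :: real
      define q where "q = complex_of_real s * b t"
      have q1: "q \<noteq> 1" using nz[of t] unfolding q_def by auto
      have q1': "1 - q \<noteq> 0" using q1 by simp
      have nq: "norm q \<le> 1/2" using q[of t] unfolding q_def .
      have "1 / (1 - q) - (\<Sum>m<N. q^m) = q^N / (1 - q)"
      proof -
        have "(\<Sum>m<N. q^m) = (1 - q^N) / (1 - q)" using q1 by (simp add: sum_gp_strict)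
        then show ?thesis using q1' by (simp add: field_simps)
      qed
      moreover have "norm (q^N / (1 - q)) \<le> 2 * (1/2)^N"
      proof -
        have "1/2 \<le> norm (1 - q)" using norm_triangle_ineq2[of 1 q] nq by simp
        moreover have "norm (q^N) \<le> (1/2)^N" using nq by (simp add: norm_power power_mono)
        ultimately have "norm (q^N) / norm (1 - q) \<le> (1/2)^N / (1/2)"
          by (intro frac_le) auto
        then show ?thesis by (simp add: norm_divide)
      qed
      ultimately show "norm (1 / (1 - complex_of_real s * b t) - (\<Sum>m<N. (complex_of_real s * b t)^m)) \<le> e"
        using N unfolding q_def by simp
    qed
  qed
qed

lemma sbm_mult:
  fixes F G :: "real \<Rightarrow> 'b::{real_normed_algebra, second_countable_topology}"
  assumes "set_borel_measurable lebesgue A F" "set_borel_measurable lebesgue A G"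
  shows "set_borel_measurable lebesgue A (\<lambda>x. F x * G x)"
proof -
  have "(\<lambda>x. (indicator A x *\<^sub>R F x) * (indicator A x *\<^sub>R G x)) \<in> borel_measurable lebesgue"
    using assms unfolding set_borel_measurable_def by (rule borel_measurable_times)
  moreover have "(\<lambda>x. (indicator A x *\<^sub>R F x) * (indicator A x *\<^sub>R G x)) = (\<lambda>x. indicator A x *\<^sub>R (F x * G x))"
    by (auto simp: indicator_def)
  ultimately show ?thesis unfolding set_borel_measurable_def by simp
qed

lemma sbm_add:
  fixes F G :: "real \<Rightarrow> 'b::{real_normed_vector, second_countable_topology}"
  assumes "set_borel_measurable lebesgue A F" "set_borel_measurable lebesgue A G"
  shows "set_borel_measurable lebesgue A (\<lambda>x. F x + G x)" "set_borel_measurable lebesgue A (\<lambda>x. F x - G x)"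
  using assms unfolding set_borel_measurable_def by (simp_all add: scaleR_add_right scaleR_diff_right)

lemma sbm_comp:
  fixes F :: "real \<Rightarrow> 'b::{real_normed_vector, second_countable_topology}" and \<phi> :: "'b \<Rightarrow> 'c::{real_normed_vector, second_countable_topology}"
  assumes "set_borel_measurable lebesgue A F" "continuous_on UNIV \<phi>" "\<phi> 0 = 0"
  shows "set_borel_measurable lebesgue A (\<lambda>x. \<phi> (F x))"
proof -
  have pm: "\<phi> \<in> borel_measurable borel" by (rule borel_measurable_continuous_onI[OF assms(2)])
  have "(\<lambda>x. \<phi> (indicator A x *\<^sub>R F x)) \<in> borel_measurable lebesgue"
    using assms(1) pm unfolding set_borel_measurable_def by (rule measurable_compose)
  moreover have "(\<lambda>x. \<phi> (indicator A x *\<^sub>R F x)) = (\<lambda>x. indicator A x *\<^sub>R \<phi> (F x))"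
    using assms(3) by (auto simp: indicator_def)
  ultimately show ?thesis unfolding set_borel_measurable_def by simp
qed

lemma sbm_cont:
  fixes \<phi> :: "real \<Rightarrow> 'b::{real_normed_vector, second_countable_topology}"
  assumes "continuous_on UNIV \<phi>" "A \<in> sets lebesgue"
  shows "set_borel_measurable lebesgue A \<phi>"
  unfolding set_borel_measurable_def
  using assms(2) bor_leb[OF borel_measurable_continuous_onI[OF assms(1)]]
  by (intro borel_measurable_scaleR borel_measurable_indicator) auto

lemma sbm_norm: fixes A :: "real set" and F :: "real \<Rightarrow> complex" assumes "set_borel_measurable lebesgue A F" shows "set_borel_measurable lebesgue A (\<lambda>x. norm (F x::complex))"
  using sbm_comp[where \<phi>="\<lambda>z::complex. norm z" and A=A and F=F] assms by (auto intro: continuous_intros)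

lemma c_sbm_sq: "continuous_on UNIV (\<lambda>z::real. z\<^sup>2)" by (intro continuous_intros)

lemma sbm_sq: fixes A :: "real set" and F :: "real \<Rightarrow> real" assumes "set_borel_measurable lebesgue A F" shows "set_borel_measurable lebesgue A (\<lambda>x. (F x::real)\<^sup>2)"
  using sbm_comp[where \<phi>="\<lambda>z::real. z\<^sup>2" and A=A and F=F] assms by (auto intro: continuous_intros simp: c_sbm_sq)

lemma c_sbm_Re: "continuous_on UNIV (\<lambda>z::complex. Re z)" by (intro continuous_intros)

lemma sbm_Re: fixes A :: "real set" and F :: "real \<Rightarrow> complex" assumes "set_borel_measurable lebesgue A F" shows "set_borel_measurable lebesgue A (\<lambda>x. Re (F x))"
  using sbm_comp[where \<phi>="\<lambda>z. Re z" and A=A and F=F] assms by (auto intro: continuous_intros simp: c_sbm_Re)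

lemma sbm_cnj: fixes A :: "real set" and F :: "real \<Rightarrow> complex" assumes "set_borel_measurable lebesgue A F" shows "set_borel_measurable lebesgue A (\<lambda>x. cnj (F x))"
  using sbm_comp[where \<phi>="\<lambda>z. cnj z" and A=A and F=F] assms by (auto intro: continuous_intros)

lemma sbm_scale: fixes A :: "real set" and F :: "real \<Rightarrow> real" assumes "set_borel_measurable lebesgue A F" shows "set_borel_measurable lebesgue A (\<lambda>x. c * (F x::real))"
  using sbm_comp[where \<phi>="\<lambda>z::real. c * z" and A=A and F=F] assms by (auto intro: continuous_intros)

lemma norm_diff_sq: "(cmod (a - b))\<^sup>2 = (cmod a)\<^sup>2 - 2 * Re (a * cnj b) + (cmod b)\<^sup>2"
  by (simp add: cmod_power2 power2_diff)

lemma expand_bound: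
  fixes e g b :: complex and s K :: real
  assumes bK: "cmod b \<le> K" and sK: "\<bar>s\<bar> * K \<le> 1/2"
  shows "(cmod (e - g * (1 / (1 - complex_of_real s * b) - 1)))\<^sup>2
      \<le> (cmod e)\<^sup>2 - 2 * s * Re (e * cnj (g * b)) + s\<^sup>2 * (4 * K\<^sup>2 * (cmod e * cmod g + (cmod g)\<^sup>2))"
proof -
  have K0: "0 \<le> K" using bK norm_ge_zero order_trans by blast
  define q where "q = 1 - complex_of_real s * b"
  have sb: "cmod (complex_of_real s * b) \<le> 1/2"
  proof -
    have "cmod (complex_of_real s * b) = \<bar>s\<bar> * cmod b" by (simp add: norm_mult)
    also have "\<dots> \<le> \<bar>s\<bar> * K" by (intro mult_left_mono bK) auto
    finally show ?thesis using sK by simp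
  qed
  have q2: "1/2 \<le> cmod q" unfolding q_def using norm_triangle_ineq2[of 1 "complex_of_real s * b"] sb by simp
  then have q0: "q \<noteq> 0" by auto
  define R where "R = g * b^2 / q"
  define T where "T = g * (1 / q - 1)"
  have T: "T = complex_of_real s * (g * b) + (complex_of_real s)^2 * R"
  proof -
    have "1 / q - 1 = (1 - q) / q" using q0 by (simp add: field_simps)
    also have "1 - q = complex_of_real s * b" unfolding q_def by simp
    finally have "T = g * (complex_of_real s * b) / q" unfolding T_def by simp
    also have "\<dots> = complex_of_real s * (g * b) + (complex_of_real s)^2 * R"
    proof -
      have "g * (complex_of_real s * b) = (complex_of_real s * (g * b)) * q + (complex_of_real s)^2 * (g * b^2)"
        unfolding q_def by (simp add: algebra_simps power2_eq_square)
      then have "g * (complex_of_real s * b) / q = ((complex_of_real s * (g * b)) * q + (complex_of_real s)^2 * (g * b^2)) / q"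
        by simp
      also have "\<dots> = complex_of_real s * (g * b) + (complex_of_real s)^2 * (g * b^2) / q"
        using q0 by (simp add: add_divide_distrib)
      finally show ?thesis unfolding R_def by simp
    qed
    finally show ?thesis .
  qed
  have nR: "cmod R \<le> 2 * K\<^sup>2 * cmod g"
  proof -
    have "cmod R = cmod g * (cmod b)\<^sup>2 / cmod q" unfolding R_def by (simp add: norm_mult norm_divide norm_power)
    also have "\<dots> \<le> cmod g * K\<^sup>2 / (1/2)"
      using q2 bK by (intro frac_le mult_left_mono power_mono) auto
    finally show ?thesis by (simp add: algebra_simps)
  qed
  have nT: "cmod T \<le> 2 * \<bar>s\<bar> * K * cmod g"
  proof -
    have "cmod T = cmod g * (\<bar>s\<bar> * cmod b) / cmod q"
    proof -
      have "T = g * (complex_of_real s * b) / q"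
      proof -
        have "1 / q - 1 = (1 - q) / q" using q0 by (simp add: field_simps)
        then show ?thesis unfolding T_def q_def by simp
      qed
      then show ?thesis by (simp add: norm_mult norm_divide)
    qed
    also have "\<dots> \<le> cmod g * (\<bar>s\<bar> * K) / (1/2)"
      using q2 bK K0 by (intro frac_le mult_left_mono mult_nonneg_nonneg) auto
    finally show ?thesis by (simp add: algebra_simps)
  qed
  have "(cmod (e - T))\<^sup>2 = (cmod e)\<^sup>2 - 2 * Re (e * cnj T) + (cmod T)\<^sup>2" by (rule norm_diff_sq)
  also have "Re (e * cnj T) = s * Re (e * cnj (g * b)) + s\<^sup>2 * Re (e * cnj R)"
    unfolding T by (simp add: algebra_simps power2_eq_square)
  finally have eq: "(cmod (e - T))\<^sup>2 = (cmod e)\<^sup>2 - 2 * s * Re (e * cnj (g * b)) + (- 2 * s\<^sup>2 * Re (e * cnj R) + (cmod T)\<^sup>2)"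
    by (simp add: algebra_simps)
  have b1: "- 2 * s\<^sup>2 * Re (e * cnj R) \<le> s\<^sup>2 * (4 * K\<^sup>2 * (cmod e * cmod g))"
  proof -
    have "- Re (e * cnj R) \<le> cmod (e * cnj R)" using abs_Re_le_cmod[of "e * cnj R"] by linarith
    also have "\<dots> = cmod e * cmod R" by (simp add: norm_mult)
    also have "\<dots> \<le> cmod e * (2 * K\<^sup>2 * cmod g)" by (intro mult_left_mono nR) auto
    finally have "- Re (e * cnj R) \<le> cmod e * (2 * K\<^sup>2 * cmod g)" .
    then have "2 * s\<^sup>2 * (- Re (e * cnj R)) \<le> 2 * s\<^sup>2 * (cmod e * (2 * K\<^sup>2 * cmod g))"
      by (intro mult_left_mono) auto
    then show ?thesis by (simp add: algebra_simps)
  qed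
  have b2: "(cmod T)\<^sup>2 \<le> s\<^sup>2 * (4 * K\<^sup>2 * (cmod g)\<^sup>2)"
  proof -
    have "(cmod T)\<^sup>2 \<le> (2 * \<bar>s\<bar> * K * cmod g)\<^sup>2" using nT by (intro power_mono) auto
    then show ?thesis by (simp add: power_mult_distrib power2_abs)
  qed
  show ?thesis using eq b1 b2 unfolding T_def q_def by (simp add: algebra_simps)
qed

lemma sq_bound_aux: "a * b \<le> a\<^sup>2 + b\<^sup>2" if "0 \<le> a" "0 \<le> b" for a b :: real
proof -
  have "0 \<le> (a - b)\<^sup>2" by simp
  then have "2 * a * b \<le> a\<^sup>2 + b\<^sup>2" by (simp add: power2_diff)
  moreover have "a * b \<le> 2 * a * b" using that by simp
  ultimately show ?thesis by linarith
qed

lemma two_ab: "2 * a * b \<le> a\<^sup>2 + b\<^sup>2" for a b :: real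
proof -
  have "0 \<le> (a - b)\<^sup>2" by simp
  then show ?thesis by (simp add: power2_diff)
qed

lemma variational:
  fixes e G0 b :: "real \<Rightarrow> complex" and AI :: "real set" and K :: real
  assumes AI: "AI \<in> sets lebesgue"
    and me: "set_borel_measurable lebesgue AI e" and mG: "set_borel_measurable lebesgue AI G0"
    and ie: "set_integrable lebesgue AI (\<lambda>t. (cmod (e t))\<^sup>2)" and iG: "set_integrable lebesgue AI (\<lambda>t. (cmod (G0 t))\<^sup>2)"
    and bc: "continuous_on UNIV b" and bK: "\<And>t. cmod (b t) \<le> K" and K0: "K > 0"
    and mini: "\<And>s. \<bar>s\<bar> * K \<le> 1/2 \<Longrightarrow>
        (LINT t:AI|lebesgue. (cmod (e t))\<^sup>2) \<le> (LINT t:AI|lebesgue. (cmod (e t - G0 t * (1 / (1 - complex_of_real s * b t) - 1)))\<^sup>2)"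
  shows "(LINT t:AI|lebesgue. Re (e t * cnj (G0 t * b t))) = 0"
proof -
  have mb: "set_borel_measurable lebesgue AI b" by (rule sbm_cont[OF bc AI])
  have iEG2: "set_integrable lebesgue AI (\<lambda>t. (cmod (e t))\<^sup>2 + (cmod (G0 t))\<^sup>2)"
    by (rule set_integral_add(1)[OF ie iG])
  have mne: "set_borel_measurable lebesgue AI (\<lambda>t. cmod (e t))" by (rule sbm_norm[OF me])
  have mnG: "set_borel_measurable lebesgue AI (\<lambda>t. cmod (G0 t))" by (rule sbm_norm[OF mG])
  have iEG: "set_integrable lebesgue AI (\<lambda>t. cmod (e t) * cmod (G0 t))"
  proof (rule set_integrable_bound[OF iEG2])
    show "set_borel_measurable lebesgue AI (\<lambda>t. cmod (e t) * cmod (G0 t))" by (rule sbm_mult[OF mne mnG])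
    show "AE t in lebesgue. t \<in> AI \<longrightarrow> norm (cmod (e t) * cmod (G0 t)) \<le> norm ((cmod (e t))\<^sup>2 + (cmod (G0 t))\<^sup>2)"
      by (auto intro!: sq_bound_aux)
  qed
  define P where "P t = 4 * K\<^sup>2 * (cmod (e t) * cmod (G0 t) + (cmod (G0 t))\<^sup>2)" for t
  have iP: "set_integrable lebesgue AI P"
    unfolding P_def by (intro set_integrable_mult_right set_integral_add(1) iEG iG)
  define R where "R t = Re (e t * cnj (G0 t * b t))" for t
  have mR: "set_borel_measurable lebesgue AI R"
    unfolding R_def by (intro sbm_Re sbm_mult me sbm_cnj mG mb)
  have iR: "set_integrable lebesgue AI R"
  proof (rule set_integrable_bound[OF set_integrable_mult_right[OF iEG2, of K] mR])
    show "AE t in lebesgue. t \<in> AI \<longrightarrow> norm (R t) \<le> norm (K * ((cmod (e t))\<^sup>2 + (cmod (G0 t))\<^sup>2))"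
    proof (intro AE_I2 impI)
      fix t
      have "norm (R t) \<le> cmod (e t * cnj (G0 t * b t))" unfolding R_def real_norm_def by (rule abs_Re_le_cmod)
      also have "\<dots> = cmod (e t) * cmod (G0 t) * cmod (b t)" by (simp add: norm_mult)
      also have "\<dots> \<le> cmod (e t) * cmod (G0 t) * K" by (intro mult_left_mono bK) auto
      also have "\<dots> \<le> ((cmod (e t))\<^sup>2 + (cmod (G0 t))\<^sup>2) * K"
        using K0 by (intro mult_right_mono sq_bound_aux) auto
      finally show "norm (R t) \<le> norm (K * ((cmod (e t))\<^sup>2 + (cmod (G0 t))\<^sup>2))"
        using K0 by (simp add: mult.commute)
    qed
  qed
  define Q0 where "Q0 = (LINT t:AI|lebesgue. (cmod (e t))\<^sup>2)"
  define a where "a = (LINT t:AI|lebesgue. R t)"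
  define P0 where "P0 = (LINT t:AI|lebesgue. P t)"
  have P0: "0 \<le> P0" unfolding P0_def set_lebesgue_integral_def
    by (intro Bochner_Integration.integral_nonneg) (auto simp: P_def indicator_def)
  have key: "2 * s * a \<le> s\<^sup>2 * P0" if s: "\<bar>s\<bar> * K \<le> 1/2" for s
  proof -
    define T where "T t = (cmod (e t - G0 t * (1 / (1 - complex_of_real s * b t) - 1)))\<^sup>2" for t
    have nz: "1 - complex_of_real s * b t \<noteq> 0" for t
    proof
      assume "1 - complex_of_real s * b t = 0"
      then have "cmod (complex_of_real s * b t) = 1" by (metis eq_iff_diff_eq_0 norm_one)
      moreover have "cmod (complex_of_real s * b t) \<le> 1/2"
      proof -
        have "cmod (complex_of_real s * b t) = \<bar>s\<bar> * cmod (b t)" by (simp add: norm_mult)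
        also have "\<dots> \<le> \<bar>s\<bar> * K" by (intro mult_left_mono bK) auto
        finally show ?thesis using s by simp
      qed
      ultimately show False by simp
    qed
    have gc: "continuous_on UNIV (\<lambda>t. 1 / (1 - complex_of_real s * b t) - 1)"
      using nz by (intro continuous_intros bc) auto
    have mT: "set_borel_measurable lebesgue AI T"
      unfolding T_def by (intro sbm_sq sbm_norm sbm_add(2) me sbm_mult mG sbm_cont[OF gc AI])
    have iT: "set_integrable lebesgue AI T"
    proof (rule set_integrable_bound[OF set_integrable_mult_right[OF iEG2, of 2] mT])
      show "AE t in lebesgue. t \<in> AI \<longrightarrow> norm (T t) \<le> norm (2 * ((cmod (e t))\<^sup>2 + (cmod (G0 t))\<^sup>2))"
      proof (intro AE_I2 impI)
        fix t
        define q where "q = complex_of_real s * b t"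
        have nq: "cmod q \<le> 1/2"
        proof -
          have "cmod q = \<bar>s\<bar> * cmod (b t)" unfolding q_def by (simp add: norm_mult)
          also have "\<dots> \<le> \<bar>s\<bar> * K" by (intro mult_left_mono bK) auto
          finally show ?thesis using s by simp
        qed
        have q2: "1/2 \<le> cmod (1 - q)" using norm_triangle_ineq2[of 1 q] nq by simp
        have "1 / (1 - q) - 1 = q / (1 - q)" using nz[of t] unfolding q_def by (simp add: field_simps)
        then have "cmod (1 / (1 - q) - 1) = cmod q / cmod (1 - q)" by (simp add: norm_divide)
        also have "\<dots> \<le> (1/2) / (1/2)" using nq q2 by (intro frac_le) auto
        finally have g1: "cmod (1 / (1 - q) - 1) \<le> 1" by simp
        have "cmod (e t - G0 t * (1 / (1 - q) - 1)) \<le> cmod (e t) + cmod (G0 t) * cmod (1 / (1 - q) - 1)"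
          using norm_triangle_ineq4[of "e t" "G0 t * (1 / (1 - q) - 1)"] by (simp add: norm_mult)
        also have "\<dots> \<le> cmod (e t) + cmod (G0 t)" using g1 by (simp add: mult_left_le)
        finally have "cmod (e t - G0 t * (1 / (1 - q) - 1)) \<le> cmod (e t) + cmod (G0 t)" .
        then have "(cmod (e t - G0 t * (1 / (1 - q) - 1)))\<^sup>2 \<le> (cmod (e t) + cmod (G0 t))\<^sup>2"
          by (intro power_mono) auto
        also have "\<dots> \<le> 2 * ((cmod (e t))\<^sup>2 + (cmod (G0 t))\<^sup>2)"
          using two_ab[of "cmod (e t)" "cmod (G0 t)"] by (simp add: power2_sum)
        finally show "norm (T t) \<le> norm (2 * ((cmod (e t))\<^sup>2 + (cmod (G0 t))\<^sup>2))"
          unfolding T_def q_def by simp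
      qed
    qed
    have iRHS: "set_integrable lebesgue AI (\<lambda>t. (cmod (e t))\<^sup>2 - 2 * s * R t + s\<^sup>2 * P t)"
      by (intro set_integral_add(1) set_integral_diff(1) ie set_integrable_mult_right iR iP)
    have "Q0 \<le> (LINT t:AI|lebesgue. T t)" unfolding Q0_def T_def by (rule mini[OF s])
    also have "\<dots> \<le> (LINT t:AI|lebesgue. (cmod (e t))\<^sup>2 - 2 * s * R t + s\<^sup>2 * P t)"
    proof (rule set_integral_mono[OF iT iRHS])
      fix t
      show "T t \<le> (cmod (e t))\<^sup>2 - 2 * s * R t + s\<^sup>2 * P t"
        unfolding T_def R_def P_def by (rule expand_bound[OF bK s])
    qed
    also have "\<dots> = Q0 - 2 * s * a + s\<^sup>2 * P0"
    proof -
      have i1: "set_integrable lebesgue AI (\<lambda>t. 2 * s * R t)" by (intro set_integrable_mult_right iR)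
      have i2: "set_integrable lebesgue AI (\<lambda>t. s\<^sup>2 * P t)" by (intro set_integrable_mult_right iP)
      have i3: "set_integrable lebesgue AI (\<lambda>t. (cmod (e t))\<^sup>2 - 2 * s * R t)" by (intro set_integral_diff(1) ie i1)
      have "(LINT t:AI|lebesgue. (cmod (e t))\<^sup>2 - 2 * s * R t + s\<^sup>2 * P t)
          = (LINT t:AI|lebesgue. (cmod (e t))\<^sup>2 - 2 * s * R t) + (LINT t:AI|lebesgue. s\<^sup>2 * P t)"
        by (rule set_integral_add(2)[OF i3 i2])
      also have "(LINT t:AI|lebesgue. (cmod (e t))\<^sup>2 - 2 * s * R t) = Q0 - (LINT t:AI|lebesgue. 2 * s * R t)"
        unfolding Q0_def by (rule set_integral_diff(2)[OF ie i1])
      also have "(LINT t:AI|lebesgue. 2 * s * R t) = 2 * s * a" unfolding a_def by (rule set_integral_mult_right)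
      also have "(LINT t:AI|lebesgue. s\<^sup>2 * P t) = s\<^sup>2 * P0" unfolding P0_def by (rule set_integral_mult_right)
      finally show ?thesis .
    qed
    finally show ?thesis by simp
  qed
  show ?thesis
  proof (rule ccontr)
    assume "(LINT t:AI|lebesgue. Re (e t * cnj (G0 t * b t))) \<noteq> 0"
    then have a0: "a \<noteq> 0" unfolding a_def R_def .
    define m where "m = min (1/(2*K)) (\<bar>a\<bar> / (P0 + 1))"
    have m0: "0 < m" unfolding m_def using K0 a0 P0 by simp
    have mK: "m * K \<le> 1/2"
    proof -
      have "m \<le> 1/(2*K)" unfolding m_def by simp
      then have "m * K \<le> 1/(2*K) * K" using K0 by (intro mult_right_mono) auto
      then show ?thesis using K0 by simp
    qed
    have mP: "m * P0 < \<bar>a\<bar>"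
    proof -
      have "m \<le> \<bar>a\<bar> / (P0 + 1)" unfolding m_def by simp
      then have "m * P0 \<le> \<bar>a\<bar> / (P0 + 1) * P0" using P0 by (intro mult_right_mono) auto
      also have "\<dots> < \<bar>a\<bar>"
      proof -
        have "\<bar>a\<bar> / (P0 + 1) * P0 = \<bar>a\<bar> * (P0 / (P0 + 1))" by simp
        also have "\<dots> < \<bar>a\<bar> * 1" using a0 P0 by (intro mult_strict_left_mono) (auto simp: divide_simps)
        finally show ?thesis by simp
      qed
      finally show ?thesis .
    qed
    show False
    proof (cases "a > 0")
      case True
      have "2 * m * a \<le> m\<^sup>2 * P0" by (rule key) (use mK m0 in simp)
      then have "2 * a \<le> m * P0" using m0 by (simp add: power2_eq_square)
      then show False using mP True by simp
    next
      case False
      then have an: "a < 0" using a0 by simp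
      have "2 * (-m) * a \<le> (-m)\<^sup>2 * P0" by (rule key) (use mK m0 in simp)
      then have "m * (- (2 * a)) \<le> m * (m * P0)" by (simp add: algebra_simps power2_eq_square)
      then have "- 2 * a \<le> m * P0" using m0 by (simp only: mult_le_cancel_left_pos)
      then show False using mP an by simp
    qed
  qed
qed

lemma angles_circT: "angles circT = {0..<2*pi}"
  unfolding angles_def circT_def by auto

lemma angles_sub: "angles E \<subseteq> {0..<2*pi}"
  unfolding angles_def by auto

lemma re_inner: "Re (inner_on E u u) = (1/(2*pi)) * (LINT t:angles E|lebesgue. (cmod (u (cis t)))\<^sup>2)"
proof -
  have "(\<lambda>t. u (cis t) * cnj (u (cis t))) = (\<lambda>t. complex_of_real ((cmod (u (cis t)))\<^sup>2))"
    by (simp only: complex_norm_square)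
  then have "inner_on E u u = complex_of_real (1/(2*pi)) * complex_of_real (LINT t:angles E|lebesgue. (cmod (u (cis t)))\<^sup>2)"
    unfolding inner_on_def by (simp only: set_integral_complex_of_real)
  then show ?thesis by simp
qed

lemma norm_on_le:
  assumes "norm_on E u \<le> norm_on E v"
  shows "(LINT t:angles E|lebesgue. (cmod (u (cis t)))\<^sup>2) \<le> (LINT t:angles E|lebesgue. (cmod (v (cis t)))\<^sup>2)"
proof -
  have "Re (inner_on E u u) \<le> Re (inner_on E v v)" using assms unfolding norm_on_def by simp
  then show ?thesis unfolding re_inner by (simp add: divide_simps)
qed

lemma Re_Bb_zero:
  assumes supp: "closure {z \<in> circT. h z \<noteq> 0} \<subseteq> (top_of_set circT) interior_of I"
    and t: "cis t \<notin> I"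
  shows "Re (Bb h (cis t)) = 0"
proof -
  have h0: "h (cis t) = 0" using supp_in_I[OF supp] t by blast
  define F where "F x = kr 1 x * complex_of_real (h (cis t * cis (-x)) - h (cis t))" for x
  have ReF: "Re (indicator {-pi..pi} x *\<^sub>R F x) = 0" for x
    unfolding F_def by (simp add: Re_kr1)
  have "Re (LINT x:{-pi..pi}|lebesgue. F x) = 0"
  proof (cases "integrable lebesgue (\<lambda>x. indicator {-pi..pi} x *\<^sub>R F x)")
    case True
    have "Re (LINT x:{-pi..pi}|lebesgue. F x) = (LINT x|lebesgue. Re (indicator {-pi..pi} x *\<^sub>R F x))"
      unfolding set_lebesgue_integral_def by (rule integral_Re[OF True, symmetric])
    also have "\<dots> = 0" unfolding ReF by simp
    finally show ?thesis .
  next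
    case False
    then show ?thesis unfolding set_lebesgue_integral_def by (simp add: not_integrable_integral_eq)
  qed
  then show ?thesis unfolding Bb_def F_def[symmetric] using h0 by simp
qed

lemma Bb_bounded:
  assumes dini: "dini_continuous h" and Mb: "\<And>u. \<bar>h (cis u)\<bar> \<le> M"
    and supp: "closure {z \<in> circT. h z \<noteq> 0} \<subseteq> (top_of_set circT) interior_of I"
  shows "\<exists>K>0. \<forall>t. cmod (Bb h (cis t)) \<le> K"
proof -
  have "compact (Bb h ` sphere 0 1)"
    by (rule compact_continuous_image[OF Bb_cont[OF dini Mb supp] compact_sphere])
  then obtain K where K: "\<And>y. y \<in> Bb h ` sphere 0 1 \<Longrightarrow> norm y \<le> K"
    using compact_imp_bounded[of "Bb h ` sphere 0 1"] unfolding bounded_iff by blast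
  show ?thesis
  proof (intro exI[of _ "max K 1"] conjI allI)
    fix t
    have "cis t \<in> sphere 0 1" by simp
    then show "cmod (Bb h (cis t)) \<le> max K 1" using K by fastforce
  qed simp
qed

lemma Bf_cis: "Bf I h (cis t) = Bb h (cis t)" unfolding Bf_def by simp

lemma setint_const_Ico: "set_integrable lebesgue {0..<2*pi} (\<lambda>t. c::real)"
  unfolding set_integrable_def using emeas_Ico by (intro integrable_indicator) auto

lemma gs_admissible:
  assumes dini: "dini_continuous h" and Mb: "\<And>u. \<bar>h (cis u)\<bar> \<le> M"
    and supp: "closure {z \<in> circT. h z \<noteq> 0} \<subseteq> (top_of_set circT) interior_of I"
    and g0adm: "BEP_admissible (circT - I) g0"
    and K: "K > 0" "\<And>t. cmod (Bb h (cis t)) \<le> K" and s: "\<bar>s\<bar> * K \<le> 1/2"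
  shows "BEP_admissible (circT - I) (\<lambda>z. g0 z * (1 / (1 - complex_of_real s * Bf I h z)))"
proof -
  define b where "b t = Bb h (cis t)" for t
  define Gs where "Gs t = 1 / (1 - complex_of_real s * b t)" for t
  have gs_cis: "(\<lambda>z. g0 z * (1 / (1 - complex_of_real s * Bf I h z))) (cis t) = g0 (cis t) * Gs t" for t
    unfolding Gs_def b_def Bf_cis by simp
  have H2g0: "H2 g0" using g0adm unfolding BEP_admissible_def by simp
  have mg0: "set_borel_measurable lebesgue {0..<2*pi} (\<lambda>t. g0 (cis t))"
    using H2g0 unfolding H2_def L2_on_def set_borel_measurable_def angles_circT by simp
  have ig0: "set_integrable lebesgue {0..<2*pi} (\<lambda>t. (cmod (g0 (cis t)))\<^sup>2)"
    using H2g0 unfolding H2_def L2_on_def angles_circT by simp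
  have sb: "cmod (complex_of_real s * b t) \<le> 1/2" for t
  proof -
    have "cmod (complex_of_real s * b t) = \<bar>s\<bar> * cmod (b t)" by (simp add: norm_mult)
    also have "\<dots> \<le> \<bar>s\<bar> * K" unfolding b_def by (intro mult_left_mono K(2)) auto
    finally show ?thesis using s by simp
  qed
  have q2: "1/2 \<le> cmod (1 - complex_of_real s * b t)" for t
    using norm_triangle_ineq2[of 1 "complex_of_real s * b t"] sb[of t] by simp
  have nz: "1 - complex_of_real s * b t \<noteq> 0" for t using q2[of t] by auto
  have Gs2: "cmod (Gs t) \<le> 2" for t
  proof -
    have "cmod (Gs t) = 1 / cmod (1 - complex_of_real s * b t)" unfolding Gs_def by (simp add: norm_divide)
    also have "\<dots> \<le> 1 / (1/2)" using q2[of t] by (intro divide_left_mono) auto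
    finally show ?thesis by simp
  qed
  have bc: "continuous_on UNIV b"
    unfolding b_def by (rule continuous_on_compose2[OF Bb_cont[OF dini Mb supp]]) (auto intro!: continuous_intros)
  have Gc: "continuous_on UNIV Gs" unfolding Gs_def using nz by (intro continuous_intros bc) auto
  have mGs: "set_borel_measurable lebesgue {0..<2*pi} Gs" by (rule sbm_cont[OF Gc]) simp
  have mprod: "set_borel_measurable lebesgue {0..<2*pi} (\<lambda>t. g0 (cis t) * Gs t)" by (rule sbm_mult[OF mg0 mGs])
  have L2: "L2_on circT (\<lambda>z. g0 z * (1 / (1 - complex_of_real s * Bf I h z)))"
    unfolding L2_on_def angles_circT gs_cis
  proof
    show "(\<lambda>t. indicator {0..<2*pi} t *\<^sub>R (g0 (cis t) * Gs t)) \<in> borel_measurable lebesgue"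
      using mprod unfolding set_borel_measurable_def .
    show "set_integrable lebesgue {0..<2*pi} (\<lambda>t. (cmod (g0 (cis t) * Gs t))\<^sup>2)"
    proof (rule set_integrable_bound[OF set_integrable_mult_right[OF ig0, of 4]])
      show "set_borel_measurable lebesgue {0..<2*pi} (\<lambda>t. (cmod (g0 (cis t) * Gs t))\<^sup>2)"
        by (intro sbm_sq sbm_norm mprod)
      show "AE t in lebesgue. t \<in> {0..<2*pi} \<longrightarrow> norm ((cmod (g0 (cis t) * Gs t))\<^sup>2) \<le> norm (4 * (cmod (g0 (cis t)))\<^sup>2)"
      proof (intro AE_I2 impI)
        fix t
        have "cmod (g0 (cis t) * Gs t) \<le> cmod (g0 (cis t)) * 2"
          unfolding norm_mult by (intro mult_left_mono Gs2) auto
        then have "(cmod (g0 (cis t) * Gs t))\<^sup>2 \<le> (cmod (g0 (cis t)) * 2)\<^sup>2" by (intro power_mono) auto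
        then show "norm ((cmod (g0 (cis t) * Gs t))\<^sup>2) \<le> norm (4 * (cmod (g0 (cis t)))\<^sup>2)"
          by (simp add: power_mult_distrib)
      qed
    qed
  qed
  have ig0': "set_integrable lebesgue {0..<2*pi} (\<lambda>t. g0 (cis t))"
  proof (rule set_integrable_bound[OF set_integral_add(1)[OF setint_const_Ico[of 1] ig0] mg0])
    show "AE t in lebesgue. t \<in> {0..<2*pi} \<longrightarrow> norm (g0 (cis t)) \<le> norm (1 + (cmod (g0 (cis t)))\<^sup>2)"
    proof (intro AE_I2 impI)
      fix t
      have "cmod (g0 (cis t)) \<le> 1 + (cmod (g0 (cis t)))\<^sup>2"
      proof (cases "cmod (g0 (cis t)) \<le> 1")
        case True then show ?thesis by (simp add: add_increasing2)
      next
        case False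
        then have "cmod (g0 (cis t)) * 1 \<le> cmod (g0 (cis t)) * cmod (g0 (cis t))" by (intro mult_left_mono) auto
        then show ?thesis by (simp add: power2_eq_square)
      qed
      then show "norm (g0 (cis t)) \<le> norm (1 + (cmod (g0 (cis t)))\<^sup>2)" by simp
    qed
  qed
  have Fz0: "Fz (\<lambda>t. g0 (cis t))" using H2g0 unfolding H2_def Fz_def by simp
  have AG: "Amult Gs"
    unfolding Gs_def by (rule geom_A[OF _ _ s]) (use Bb_A[OF dini Mb supp] K(2) in \<open>auto simp: b_def\<close>)
  have Fz1: "Fz (\<lambda>t. g0 (cis t) * Gs t)" using AG ig0' Fz0 unfolding Amult_def by blast
  have H2gs: "H2 (\<lambda>z. g0 z * (1 / (1 - complex_of_real s * Bf I h z)))"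
    unfolding H2_def using L2 Fz1 unfolding Fz_def gs_cis by simp
  have ae0: "AE t in lebesgue. t \<in> angles (circT - I) \<longrightarrow> cmod (g0 (cis t)) \<le> 1"
    using g0adm unfolding BEP_admissible_def by simp
  have pt: "cmod (Gs t) \<le> 1" if t: "t \<in> angles (circT - I)" for t
  proof -
    from t have "cis t \<notin> I" unfolding angles_def by auto
    then have "Re (b t) = 0" unfolding b_def by (rule Re_Bb_zero[OF supp])
    then have R1: "Re (1 - complex_of_real s * b t) = 1" by simp
    have "1 \<le> cmod (1 - complex_of_real s * b t)" using abs_Re_le_cmod[of "1 - complex_of_real s * b t"] unfolding R1 by simp
    then show "cmod (Gs t) \<le> 1" unfolding Gs_def by (simp add: norm_divide divide_le_eq_1)
  qed
  have AE: "AE t in lebesgue. t \<in> angles (circT - I) \<longrightarrow> cmod (g0 (cis t) * Gs t) \<le> 1"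
    using ae0
  proof eventually_elim
    fix t assume g1: "t \<in> angles (circT - I) \<longrightarrow> cmod (g0 (cis t)) \<le> 1"
    show "t \<in> angles (circT - I) \<longrightarrow> cmod (g0 (cis t) * Gs t) \<le> 1"
    proof
      assume t: "t \<in> angles (circT - I)"
      have "cmod (g0 (cis t) * Gs t) \<le> cmod (g0 (cis t)) * 1" unfolding norm_mult by (intro mult_left_mono pt[OF t]) auto
      then show "cmod (g0 (cis t) * Gs t) \<le> 1" using g1 t by simp
    qed
  qed
  show ?thesis unfolding BEP_admissible_def using H2gs AE unfolding gs_cis by simp
qed

lemma main_inner:
  assumes mI: "meas_T I" and fL2: "L2_on I f" and sol: "BEP_solution I f g0"
    and dini: "dini_continuous h"
    and supp: "closure {z \<in> circT. h z \<noteq> 0} \<subseteq> (top_of_set circT) interior_of I"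
  shows "Re (inner_on I (\<lambda>z. (f z - g0 z) * cnj (g0 z)) (Bf I h)) = 0"
proof -
  obtain M where Mb: "\<And>u. \<bar>h (cis u)\<bar> \<le> M" using dini_bounded[OF dini] by blast
  obtain K where K: "K > 0" "\<And>t. cmod (Bb h (cis t)) \<le> K" using Bb_bounded[OF dini Mb supp] by blast
  define AI where "AI = angles I"
  have AIm: "AI \<in> sets lebesgue" using mI unfolding meas_T_def AI_def by simp
  have AIs: "AI \<subseteq> {0..<2*pi}" unfolding AI_def by (rule angles_sub)
  have g0adm: "BEP_admissible (circT - I) g0" using sol unfolding BEP_solution_def by simp
  have H2g0: "H2 g0" using g0adm unfolding BEP_admissible_def by simp
  have mg0: "set_borel_measurable lebesgue {0..<2*pi} (\<lambda>t. g0 (cis t))"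
    using H2g0 unfolding H2_def L2_on_def set_borel_measurable_def angles_circT by simp
  have ig0: "set_integrable lebesgue {0..<2*pi} (\<lambda>t. (cmod (g0 (cis t)))\<^sup>2)"
    using H2g0 unfolding H2_def L2_on_def angles_circT by simp
  have mG: "set_borel_measurable lebesgue AI (\<lambda>t. g0 (cis t))"
    by (rule set_borel_measurable_subset[OF mg0 AIm AIs])
  have iG: "set_integrable lebesgue AI (\<lambda>t. (cmod (g0 (cis t)))\<^sup>2)"
    by (rule set_integrable_subset[OF ig0 AIm AIs])
  have mf: "set_borel_measurable lebesgue AI (\<lambda>t. f (cis t))"
    using fL2 unfolding L2_on_def set_borel_measurable_def AI_def by simp
  have iF: "set_integrable lebesgue AI (\<lambda>t. (cmod (f (cis t)))\<^sup>2)"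
    using fL2 unfolding L2_on_def AI_def by simp
  define e where "e t = f (cis t) - g0 (cis t)" for t
  define G0 where "G0 t = g0 (cis t)" for t
  define b where "b t = Bb h (cis t)" for t
  have me: "set_borel_measurable lebesgue AI e" unfolding e_def by (rule sbm_add(2)[OF mf mG])
  have iFG: "set_integrable lebesgue AI (\<lambda>t. (cmod (f (cis t)))\<^sup>2 + (cmod (g0 (cis t)))\<^sup>2)"
    by (rule set_integral_add(1)[OF iF iG])
  have ie: "set_integrable lebesgue AI (\<lambda>t. (cmod (e t))\<^sup>2)"
  proof (rule set_integrable_bound[OF set_integrable_mult_right[OF iFG, of 2]])
    show "set_borel_measurable lebesgue AI (\<lambda>t. (cmod (e t))\<^sup>2)" by (intro sbm_sq sbm_norm me)
    show "AE t in lebesgue. t \<in> AI \<longrightarrow> norm ((cmod (e t))\<^sup>2) \<le> norm (2 * ((cmod (f (cis t)))\<^sup>2 + (cmod (g0 (cis t)))\<^sup>2))"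
    proof (intro AE_I2 impI)
      fix t
      have "cmod (e t) \<le> cmod (f (cis t)) + cmod (g0 (cis t))" unfolding e_def by (rule norm_triangle_ineq4)
      then have "(cmod (e t))\<^sup>2 \<le> (cmod (f (cis t)) + cmod (g0 (cis t)))\<^sup>2" by (intro power_mono) auto
      also have "\<dots> \<le> 2 * ((cmod (f (cis t)))\<^sup>2 + (cmod (g0 (cis t)))\<^sup>2)"
        using two_ab[of "cmod (f (cis t))" "cmod (g0 (cis t))"] by (simp add: power2_sum)
      finally show "norm ((cmod (e t))\<^sup>2) \<le> norm (2 * ((cmod (f (cis t)))\<^sup>2 + (cmod (g0 (cis t)))\<^sup>2))" by simp
    qed
  qed
  have bc: "continuous_on UNIV b"
    unfolding b_def by (rule continuous_on_compose2[OF Bb_cont[OF dini Mb supp]]) (auto intro!: continuous_intros)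
  have mini: "(LINT t:AI|lebesgue. (cmod (e t))\<^sup>2) \<le> (LINT t:AI|lebesgue. (cmod (e t - G0 t * (1 / (1 - complex_of_real s * b t) - 1)))\<^sup>2)"
    if s: "\<bar>s\<bar> * K \<le> 1/2" for s
  proof -
    define gs where "gs z = g0 z * (1 / (1 - complex_of_real s * Bf I h z))" for z
    have adm: "BEP_admissible (circT - I) gs"
      unfolding gs_def by (rule gs_admissible[OF dini Mb supp g0adm K s])
    then have "norm_on I (\<lambda>z. f z - g0 z) \<le> norm_on I (\<lambda>z. f z - gs z)"
      using sol unfolding BEP_solution_def by blast
    then have "(LINT t:angles I|lebesgue. (cmod (f (cis t) - g0 (cis t)))\<^sup>2) \<le> (LINT t:angles I|lebesgue. (cmod (f (cis t) - gs (cis t)))\<^sup>2)"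
      by (rule norm_on_le)
    moreover have "f (cis t) - gs (cis t) = e t - G0 t * (1 / (1 - complex_of_real s * b t) - 1)" for t
      unfolding gs_def e_def G0_def b_def Bf_cis by (simp add: algebra_simps)
    ultimately show ?thesis unfolding AI_def e_def by simp
  qed
  have var: "(LINT t:AI|lebesgue. Re (e t * cnj (G0 t * b t))) = 0"
    by (rule variational[OF AIm me _ ie _ bc _ K(1) mini])
       (use mG iG K(2) in \<open>auto simp: G0_def b_def\<close>)
  define F where "F t = e t * cnj (G0 t * b t)" for t
  have iF2: "set_integrable lebesgue AI F"
  proof (rule set_integrable_bound[OF set_integrable_mult_right[OF set_integral_add(1)[OF ie iG], of K]])
    show "set_borel_measurable lebesgue AI F"
      unfolding F_def G0_def by (intro sbm_mult me sbm_cnj mG sbm_cont[OF bc AIm])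
    show "AE t in lebesgue. t \<in> AI \<longrightarrow> norm (F t) \<le> norm (K * ((cmod (e t))\<^sup>2 + (cmod (g0 (cis t)))\<^sup>2))"
    proof (intro AE_I2 impI)
      fix t
      have "norm (F t) = cmod (e t) * cmod (G0 t) * cmod (b t)" unfolding F_def by (simp add: norm_mult)
      also have "\<dots> \<le> cmod (e t) * cmod (G0 t) * K" unfolding b_def by (intro mult_left_mono K(2)) auto
      also have "\<dots> \<le> ((cmod (e t))\<^sup>2 + (cmod (G0 t))\<^sup>2) * K"
        using K(1) by (intro mult_right_mono sq_bound_aux) auto
      finally show "norm (F t) \<le> norm (K * ((cmod (e t))\<^sup>2 + (cmod (g0 (cis t)))\<^sup>2))"
        using K(1) by (simp add: G0_def mult.commute)
    qed
  qed
  have ReF: "Re (LINT t:AI|lebesgue. F t) = (LINT t:AI|lebesgue. Re (F t))"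
  proof -
    have "Re (LINT t:AI|lebesgue. F t) = (LINT t|lebesgue. Re (indicator AI t *\<^sub>R F t))"
      unfolding set_lebesgue_integral_def
      by (rule integral_Re[symmetric]) (use iF2 in \<open>simp add: set_integrable_def\<close>)
    also have "\<dots> = (LINT t:AI|lebesgue. Re (F t))" unfolding set_lebesgue_integral_def by simp
    finally show ?thesis .
  qed
  have "inner_on I (\<lambda>z. (f z - g0 z) * cnj (g0 z)) (Bf I h) = complex_of_real (1/(2*pi)) * (LINT t:AI|lebesgue. F t)"
  proof -
    have "(f (cis t) - g0 (cis t)) * cnj (g0 (cis t)) * cnj (Bf I h (cis t)) = F t" for t
      unfolding F_def e_def G0_def b_def Bf_cis by (simp add: mult.assoc)
    then show ?thesis unfolding inner_on_def AI_def by simp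
  qed
  then have "Re (inner_on I (\<lambda>z. (f z - g0 z) * cnj (g0 z)) (Bf I h)) = (1/(2*pi)) * (LINT t:AI|lebesgue. Re (F t))"
    using ReF by simp
  also have "\<dots> = 0" using var unfolding F_def by simp
  finally show ?thesis .
qed

theorem mainTheorem6:
  fixes I :: "complex set" and f g0 :: "complex \<Rightarrow> complex" and h :: "complex \<Rightarrow> real"
  assumes "meas_T I"
    and "ell I > 0" and "ell (circT - I) > 0"
    and "L2_on I f"
    and "BEP_solution I f g0"
    and "dini_continuous h"
    and "closure {z \<in> circT. h z \<noteq> 0} \<subseteq> (top_of_set circT) interior_of I"
  shows "\<exists>B. continuous_on (cball 0 1) B \<and> (\<forall>z \<in> ball 0 1. B z = herglotz I h z) \<and>
           Re (inner_on I (\<lambda>z. (f z - g0 z) * cnj (g0 z)) B) = 0"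
proof (intro exI[of _ "Bf I h"] conjI ballI)
  obtain M where Mb: "\<And>u. \<bar>h (cis u)\<bar> \<le> M" using dini_bounded[OF assms(6)] by blast
  show "continuous_on (cball 0 1) (Bf I h)" by (rule Bf_cont[OF assms(6) Mb assms(7)])
  fix z :: complex assume "z \<in> ball 0 1"
  then show "Bf I h z = herglotz I h z" unfolding Bf_def by simp
next
  show "Re (inner_on I (\<lambda>z. (f z - g0 z) * cnj (g0 z)) (Bf I h)) = 0"
    by (rule main_inner[OF assms(1,4,5,6,7)])
qed


end
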